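(* The equivalence $\sim_{\mathrm{TFL}}$ is decidable on finite systems: there is an algorithm that, given two finite systems $\mathfrak T_1,\mathfrak T_2$, decides whether $\mathfrak T_1\sim_{\mathrm{TFL}}\mathfrak T_2$.
   Context: A system (TSI) is $\mathfrak T=(S,s_0,T,I,\Sigma)$ with states $S$, initial $s_0$, labels $\Sigma$, transitions $T\subseteq S\times\Sigma\times S$, irreflexive symmetric independence $I\subseteq T\times T$ satisfying: with $(s,a,s_1)\prec(s_2,a,q)$ iff $\exists b$: $(s,a,s_1)I(s,b,s_2)$, $(s,a,s_1)I(s_1,b,q)$, $(s,b,s_2)I(s_2,a,q)$ and $\sim$ its equivalence closure, (A1) $(s,a,s_1)\sim(s,a,s_2)\Rightarrow s_1=s_2$; (A2) $(s,a,s_1)I(s,b,s_2)\Rightarrow\exists q.\,(s,a,s_1)I(s_1,b,q)\wedge(s,b,s_2)I(s_2,a,q)$; (A3) $(s,a,s_1)I(s_1,b,q)\Rightarrow\exists s_2.\,(s,a,s_1)I(s,b,s_2)\wedge(s,b,s_2)I(s_2,a,q)$; (A4) $t\sim t'\Rightarrow\{u:tIu\}=\{u:t'Iu\}$. Finite means $S$ and $T$ finite. For $t=(s,a,s')$: $\sigma(t)=s,\tau(t)=s',\delta(t)=a$. Relations: $t\otimes t'$ iff $\sigma(t)=\sigma(t')\wedge tIt'$; $t\ominus t'$ iff $\tau(t)=\sigma(t')\wedge tIt'$; $t\le t'$ iff $\tau(t)=\sigma(t')\wedge\neg tIt'$. Processes: $\mathfrak X(s)$ = transitions with source $s$; conflict-free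 set = set with common source, pairwise $\otimes$; support sets = the $\mathfrak X(s)$ and non-empty conflict-free sets; $M\sqsubseteq R$ iff $M\subseteq R$ and no $t\in R\setminus M$ has $t\otimes t'$ for all $t'\in M$; $\mathcal X$ = all $\mathfrak X(s)$ and all support sets $M\sqsubseteq\mathfrak X(s)$; $\mathfrak A=T\cup\{t_\epsilon\}$ with fresh $t_\epsilon$, $\tau(t_\epsilon)=s_0$, $t_\epsilon\le t$ whenever $\sigma(t)=s_0$, never $t_\epsilon\ominus t$; $\mathfrak S=\mathcal X\times\mathfrak A$, initial process $(\mathfrak X(s_0),t_\epsilon)$. $\mathfrak T_1\sim_{\mathrm{TFL}}\mathfrak T_2$ iff the initial processes satisfy the same closed fixpoint-free formulas $\phi::=\mathrm{tt}\mid\neg\phi\mid\phi\wedge\phi\mid\langle a\rangle_c\phi\mid\langle a\rangle_{nc}\phi\mid\langle\otimes\rangle\phi$, where $[\![\langle a\rangle_c\phi]\!]=\{(R,t):\exists r\in R.\ \delta(r)=a,\ t\le r,\ (\mathfrak X(\tau(r)),r)\in[\![\phi]\!]\}$, $\langle a\rangle_{nc}$ likewise with $t\ominus r$, $[\![\langle\otimes\rangle\phi]\!]=\{(R,t):\exists M\in\mathcal X.\ M\sqsubseteq R,\ (M,t)\in[\![\phi]\!]\}$, booleans as usual in $\mathfrak S$. *)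

theory Defs
  imports Main "HOL-Library.Nat_Bijection"
begin

type_synonym trans = "nat \<times> nat \<times> nat"

record tsi =
  St   :: "nat set"
  init :: nat
  Tr   :: "trans set"
  Ind  :: "(trans \<times> trans) set"
  Lab  :: "nat set"

definition src :: "trans \<Rightarrow> nat" where "src t = fst t"
definition lab :: "trans \<Rightarrow> nat" where "lab t = fst (snd t)"
definition tgt :: "trans \<Rightarrow> nat" where "tgt t = snd (snd t)"

definition prec :: "tsi \<Rightarrow> trans \<Rightarrow> trans \<Rightarrow> bool" where
  "prec T t u \<longleftrightarrow> (\<exists>s a s1 s2 q b. t = (s, a, s1) \<and> u = (s2, a, q) \<and>
      ((s, a, s1), (s, b, s2)) \<in> Ind T \<and> ((s, a, s1), (s1, b, q)) \<in> Ind T \<and>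
      ((s, b, s2), (s2, a, q)) \<in> Ind T)"

definition simI :: "tsi \<Rightarrow> trans \<Rightarrow> trans \<Rightarrow> bool" where
  "simI T t u \<longleftrightarrow> (t, u) \<in> ({(x, y). prec T x y} \<union> {(x, y). prec T y x})\<^sup>*"

definition is_tsi :: "tsi \<Rightarrow> bool" where
  "is_tsi T \<longleftrightarrow>
     init T \<in> St T \<and>
     Tr T \<subseteq> St T \<times> Lab T \<times> St T \<and>
     Ind T \<subseteq> Tr T \<times> Tr T \<and>
     irrefl (Ind T) \<and> sym (Ind T) \<and>
     (\<forall>s a s1 s2. simI T (s, a, s1) (s, a, s2) \<longrightarrow> s1 = s2) \<and>
     (\<forall>s a s1 b s2. ((s, a, s1), (s, b, s2)) \<in> Ind T \<longrightarrow>
        (\<exists>q. ((s, a, s1), (s1, b, q)) \<in> Ind T \<and> ((s, b, s2), (s2, a, q)) \<in> Ind T)) \<and>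
     (\<forall>s a s1 b q. ((s, a, s1), (s1, b, q)) \<in> Ind T \<longrightarrow>
        (\<exists>s2. ((s, a, s1), (s, b, s2)) \<in> Ind T \<and> ((s, b, s2), (s2, a, q)) \<in> Ind T)) \<and>
     (\<forall>t t'. simI T t t' \<longrightarrow> {u. (t, u) \<in> Ind T} = {u. (t', u) \<in> Ind T})"

definition finite_tsi :: "tsi \<Rightarrow> bool" where
  "finite_tsi T \<longleftrightarrow> is_tsi T \<and> finite (St T) \<and> finite (Tr T)"

definition otimes :: "tsi \<Rightarrow> trans \<Rightarrow> trans \<Rightarrow> bool" where
  "otimes T t u \<longleftrightarrow> src t = src u \<and> (t, u) \<in> Ind T"

(* the element None of type trans option plays the role of the fresh t_epsilon *)
definition leqA :: "tsi \<Rightarrow> trans option \<Rightarrow> trans \<Rightarrow> bool" where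
  "leqA T t r = (case t of None \<Rightarrow> src r = init T
                 | Some t' \<Rightarrow> tgt t' = src r \<and> (t', r) \<notin> Ind T)"

definition ominusA :: "tsi \<Rightarrow> trans option \<Rightarrow> trans \<Rightarrow> bool" where
  "ominusA T t r = (case t of None \<Rightarrow> False
                   | Some t' \<Rightarrow> tgt t' = src r \<and> (t', r) \<in> Ind T)"

definition Xs :: "tsi \<Rightarrow> nat \<Rightarrow> trans set" where
  "Xs T s = {t \<in> Tr T. src t = s}"

definition conflict_free :: "tsi \<Rightarrow> trans set \<Rightarrow> bool" where
  "conflict_free T M \<longleftrightarrow> M \<subseteq> Tr T \<and> (\<exists>s. \<forall>t\<in>M. src t = s) \<and>
     (\<forall>t\<in>M. \<forall>t'\<in>M. t \<noteq> t' \<longrightarrow> otimes T t t')"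

definition support_set :: "tsi \<Rightarrow> trans set \<Rightarrow> bool" where
  "support_set T M \<longleftrightarrow> (\<exists>s. M = Xs T s) \<or> (M \<noteq> {} \<and> conflict_free T M)"

definition sqsub :: "tsi \<Rightarrow> trans set \<Rightarrow> trans set \<Rightarrow> bool" where
  "sqsub T M R \<longleftrightarrow> M \<subseteq> R \<and> \<not> (\<exists>t\<in>R - M. \<forall>t'\<in>M. otimes T t t')"

definition procsets :: "tsi \<Rightarrow> trans set set" where
  "procsets T = {Xs T s | s. s \<in> St T} \<union>
                {M. support_set T M \<and> (\<exists>s\<in>St T. sqsub T M (Xs T s))}"

datatype form = TT | Neg form | Conj form form
  | DiaC nat form | DiaNC nat form | DiaOt form

fun sat :: "tsi \<Rightarrow> trans set \<times> trans option \<Rightarrow> form \<Rightarrow> bool" where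
  "sat T p TT = True"
| "sat T p (Neg \<phi>) = (\<not> sat T p \<phi>)"
| "sat T p (Conj \<phi> \<psi>) = (sat T p \<phi> \<and> sat T p \<psi>)"
| "sat T (R, t) (DiaC a \<phi>) =
     (\<exists>r\<in>R. lab r = a \<and> leqA T t r \<and> sat T (Xs T (tgt r), Some r) \<phi>)"
| "sat T (R, t) (DiaNC a \<phi>) =
     (\<exists>r\<in>R. lab r = a \<and> ominusA T t r \<and> sat T (Xs T (tgt r), Some r) \<phi>)"
| "sat T (R, t) (DiaOt \<phi>) =
     (\<exists>M\<in>procsets T. sqsub T M R \<and> sat T (M, t) \<phi>)"

definition init_proc :: "tsi \<Rightarrow> trans set \<times> trans option" where
  "init_proc T = (Xs T (init T), None)"

definition tfl_equiv :: "tsi \<Rightarrow> tsi \<Rightarrow> bool" where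
  "tfl_equiv T1 T2 \<longleftrightarrow> (\<forall>\<phi>. sat T1 (init_proc T1) \<phi> = sat T2 (init_proc T2) \<phi>)"

datatype recf = Zero | Succ | Proj nat | Comp recf "recf list"
  | PrimRec recf recf | Minim recf

inductive eval :: "recf \<Rightarrow> nat list \<Rightarrow> nat \<Rightarrow> bool" where
  "eval Zero xs 0"
| "eval Succ (x # xs) (Suc x)"
| "i < length xs \<Longrightarrow> eval (Proj i) xs (xs ! i)"
| "list_all2 (\<lambda>g y. eval g xs y) gs ys \<Longrightarrow> eval f ys z \<Longrightarrow> eval (Comp f gs) xs z"
| "eval f xs y \<Longrightarrow> eval (PrimRec f g) (0 # xs) y"
| "eval (PrimRec f g) (n # xs) y \<Longrightarrow> eval g (n # y # xs) z \<Longrightarrow>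
     eval (PrimRec f g) (Suc n # xs) z"
| "eval f (n # xs) 0 \<Longrightarrow> (\<forall>m<n. \<exists>y. eval f (m # xs) (Suc y)) \<Longrightarrow>
     eval (Minim f) xs n"
monos list_all2_mono

definition enc_trans :: "trans \<Rightarrow> nat" where
  "enc_trans t = prod_encode (src t, prod_encode (lab t, tgt t))"

definition enc_tsi :: "tsi \<Rightarrow> nat" where
  "enc_tsi T = list_encode
     [set_encode (St T), init T, set_encode (enc_trans ` Tr T),
      set_encode ((\<lambda>(t, u). prod_encode (enc_trans t, enc_trans u)) ` Ind T)]"

end

theory Submission
  imports Defs
begin


definition cf :: "nat \<Rightarrow> (nat list \<Rightarrow> nat) \<Rightarrow> bool" where
  "cf n g \<longleftrightarrow> (\<exists>f. \<forall>xs. length xs = n \<longrightarrow> eval f xs (g xs))"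

definition cfp :: "nat \<Rightarrow> (nat list \<Rightarrow> bool) \<Rightarrow> bool" where
  "cfp n P \<longleftrightarrow> cf n (\<lambda>xs. if P xs then 1 else 0)"

lemma cf_cong: "cf n g \<Longrightarrow> (\<And>xs. length xs = n \<Longrightarrow> g xs = g' xs) \<Longrightarrow> cf n g'"
  unfolding cf_def by metis

lemma cf_comp:
  assumes h: "cf (length gs) h" and gs: "\<forall>g\<in>set gs. cf n g"
  shows "cf n (\<lambda>xs. h (map (\<lambda>g. g xs) gs))"
proof -
  from gs have "\<exists>fs. list_all2 (\<lambda>f g. \<forall>xs. length xs = n \<longrightarrow> eval f xs (g xs)) fs gs"
  proof (induction gs)
    case Nil then show ?case by auto
  next
    case (Cons g gs)
    then obtain fs where "list_all2 (\<lambda>f g. \<forall>xs. length xs = n \<longrightarrow> eval f xs (g xs)) fs gs" by auto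
    moreover from Cons.prems obtain f where "\<forall>xs. length xs = n \<longrightarrow> eval f xs (g xs)"
      unfolding cf_def by auto
    ultimately show ?case by (intro exI[of _ "f # fs"]) auto
  qed
  then obtain fs where fs: "list_all2 (\<lambda>f g. \<forall>xs. length xs = n \<longrightarrow> eval f xs (g xs)) fs gs" by blast
  from h obtain fh where fh: "\<forall>ys. length ys = length gs \<longrightarrow> eval fh ys (h ys)" unfolding cf_def by blast
  show ?thesis unfolding cf_def
  proof (intro exI allI impI)
    fix xs :: "nat list" assume len: "length xs = n"
    have "list_all2 (\<lambda>g y. eval g xs y) fs (map (\<lambda>g. g xs) gs)"
      using fs len by (auto simp: list_all2_conv_all_nth)
    moreover have "eval fh (map (\<lambda>g. g xs) gs) (h (map (\<lambda>g. g xs) gs))" using fh by simp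
    ultimately show "eval (Comp fh fs) xs (h (map (\<lambda>g. g xs) gs))" by (rule eval.intros)
  qed
qed

primrec cnst :: "nat \<Rightarrow> recf" where
  "cnst 0 = Zero" | "cnst (Suc c) = Comp Succ [cnst c]"

lemma eval_cnst: "eval (cnst c) xs c"
proof (induction c)
  case 0 then show ?case by (simp add: eval.intros)
next
  case (Suc c)
  have "list_all2 (\<lambda>g y. eval g xs y) [cnst c] [c]" using Suc by simp
  moreover have "eval Succ [c] (Suc c)" by (rule eval.intros)
  ultimately show ?case unfolding cnst.simps by (rule eval.intros(4))
qed

lemma cf_const: "cf n (\<lambda>xs. c)"
  unfolding cf_def using eval_cnst by blast

lemma cf_proj: "j < n \<Longrightarrow> cf n (\<lambda>xs. xs ! j)"
  unfolding cf_def by (metis eval.intros(3))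

lemma cf_Suc1: "cf 1 (\<lambda>xs. Suc (xs ! 0))"
  unfolding cf_def
proof (intro exI allI impI)
  fix xs :: "nat list" assume "length xs = 1"
  then obtain x where "xs = [x]" by (cases xs) auto
  then show "eval Succ xs (Suc (xs ! 0))" by (simp add: eval.intros)
qed

fun precf :: "(nat list \<Rightarrow> nat) \<Rightarrow> (nat list \<Rightarrow> nat) \<Rightarrow> nat \<Rightarrow> nat list \<Rightarrow> nat" where
  "precf b s 0 ys = b ys"
| "precf b s (Suc k) ys = s (k # precf b s k ys # ys)"

lemma cf_prec:
  assumes "cf n b" "cf (Suc (Suc n)) s"
  shows "cf (Suc n) (\<lambda>xs. precf b s (hd xs) (tl xs))"
proof -
  obtain fb where fb: "\<forall>xs. length xs = n \<longrightarrow> eval fb xs (b xs)" using assms(1) unfolding cf_def by blast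
  obtain fs where fs: "\<forall>xs. length xs = Suc (Suc n) \<longrightarrow> eval fs xs (s xs)" using assms(2) unfolding cf_def by blast
  have *: "eval (PrimRec fb fs) (k # ys) (precf b s k ys)" if "length ys = n" for k ys
  proof (induction k)
    case 0 then show ?case using fb that by (simp add: eval.intros)
  next
    case (Suc k)
    then show ?case using fs that by (auto intro: eval.intros(6))
  qed
  show ?thesis unfolding cf_def
  proof (intro exI allI impI)
    fix xs :: "nat list" assume "length xs = Suc n"
    then obtain y ys where "xs = y # ys" "length ys = n" by (cases xs) auto
    then show "eval (PrimRec fb fs) xs (precf b s (hd xs) (tl xs))" using * by simp
  qed
qed

lemma cf_lift1:
  assumes "cf 1 (\<lambda>ys. F (ys ! 0))" "cf n g1"
  shows "cf n (\<lambda>xs. F (g1 xs))"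
  using cf_comp[of "[g1]" "\<lambda>ys. F (ys ! 0)" n] assms by simp

lemma cf_lift2:
  assumes "cf 2 (\<lambda>ys. F (ys ! 0) (ys ! 1))" "cf n g1" "cf n g2"
  shows "cf n (\<lambda>xs. F (g1 xs) (g2 xs))"
  using cf_comp[of "[g1,g2]" "\<lambda>ys. F (ys ! 0) (ys ! 1)" n] assms by (simp add: numeral_2_eq_2)

lemma cf_lift3:
  assumes "cf 3 (\<lambda>ys. F (ys ! 0) (ys ! 1) (ys ! 2))" "cf n g1" "cf n g2" "cf n g3"
  shows "cf n (\<lambda>xs. F (g1 xs) (g2 xs) (g3 xs))"
  using cf_comp[of "[g1,g2,g3]" "\<lambda>ys. F (ys ! 0) (ys ! 1) (ys ! 2)" n] assms
  by (simp add: numeral_3_eq_3)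

lemma cf_lift4:
  assumes "cf 4 (\<lambda>ys. F (ys ! 0) (ys ! 1) (ys ! 2) (ys ! 3))" "cf n g1" "cf n g2" "cf n g3" "cf n g4"
  shows "cf n (\<lambda>xs. F (g1 xs) (g2 xs) (g3 xs) (g4 xs))"
  using cf_comp[of "[g1,g2,g3,g4]" "\<lambda>ys. F (ys ! 0) (ys ! 1) (ys ! 2) (ys ! 3)" n] assms
  by (simp add: eval_nat_numeral)

lemma cf_lift5:
  assumes "cf 5 (\<lambda>ys. F (ys ! 0) (ys ! 1) (ys ! 2) (ys ! 3) (ys ! 4))" "cf n g1" "cf n g2" "cf n g3" "cf n g4" "cf n g5"
  shows "cf n (\<lambda>xs. F (g1 xs) (g2 xs) (g3 xs) (g4 xs) (g5 xs))"
  using cf_comp[of "[g1,g2,g3,g4,g5]" "\<lambda>ys. F (ys ! 0) (ys ! 1) (ys ! 2) (ys ! 3) (ys ! 4)" n] assms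
  by (simp add: eval_nat_numeral)

lemma cf_lift7:
  assumes "cf 7 (\<lambda>ys. F (ys ! 0) (ys ! 1) (ys ! 2) (ys ! 3) (ys ! 4) (ys ! 5) (ys ! 6))"
    "cf n g1" "cf n g2" "cf n g3" "cf n g4" "cf n g5" "cf n g6" "cf n g7"
  shows "cf n (\<lambda>xs. F (g1 xs) (g2 xs) (g3 xs) (g4 xs) (g5 xs) (g6 xs) (g7 xs))"
  using cf_comp[of "[g1,g2,g3,g4,g5,g6,g7]" "\<lambda>ys. F (ys ! 0) (ys ! 1) (ys ! 2) (ys ! 3) (ys ! 4) (ys ! 5) (ys ! 6)" n] assms
  by (simp add: eval_nat_numeral)

lemma map_nth': "length xs = n \<Longrightarrow> map (\<lambda>i. xs ! i) [0..<n] = xs"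
  using map_nth[of xs] by simp

lemma cf_cons: "cf (Suc n) g \<Longrightarrow> cf n h \<Longrightarrow> cf n (\<lambda>xs. g (h xs # xs))"
proof -
  assume a: "cf (Suc n) g" "cf n h"
  have "cf n (\<lambda>xs. g (map (\<lambda>f. f xs) (h # map (\<lambda>j xs. xs ! j) [0..<n])))"
    by (rule cf_comp) (use a cf_proj in auto)
  then show ?thesis by (rule cf_cong) (auto simp: comp_def map_nth')
qed

lemma cf_tl: "cf n g \<Longrightarrow> cf (Suc n) (\<lambda>ys. g (tl ys))"
proof -
  assume a: "cf n g"
  have "cf (Suc n) (\<lambda>ys. g (map (\<lambda>f. f ys) (map (\<lambda>j ys. ys ! Suc j) [0..<n])))"
    by (rule cf_comp) (use a cf_proj in auto)
  then show ?thesis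
    by (rule cf_cong) (auto simp: length_Suc_conv comp_def map_nth')
qed

lemma cf_skip: "cf (Suc n) g \<Longrightarrow> cf (Suc (Suc n)) (\<lambda>zs. g (zs ! 0 # tl (tl zs)))"
proof -
  assume a: "cf (Suc n) g"
  have "cf (Suc (Suc n)) (\<lambda>zs. g (map (\<lambda>f. f zs) ((\<lambda>zs. zs ! 0) # map (\<lambda>j zs. zs ! Suc (Suc j)) [0..<n])))"
    by (rule cf_comp) (use a cf_proj in auto)
  then show ?thesis
    by (rule cf_cong) (auto simp: length_Suc_conv comp_def map_nth')
qed

lemma cf_Suc: "cf n g \<Longrightarrow> cf n (\<lambda>xs. Suc (g xs))"
  using cf_lift1[OF cf_Suc1] .

lemma cf_add2: "cf 2 (\<lambda>ys. ys ! 0 + ys ! 1)"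
proof -
  have A: "cf (Suc 1) (\<lambda>xs. precf (\<lambda>ys. ys ! 0) (\<lambda>zs. Suc (zs ! 1)) (hd xs) (tl xs))"
    by (rule cf_prec) (auto intro: cf_proj cf_Suc)
  have B: "precf (\<lambda>ys. ys ! 0) (\<lambda>zs. Suc (zs ! 1)) k ys = k + ys ! 0" for k ys
    by (induction k) auto
  have "cf (Suc 1) (\<lambda>ys. ys ! 0 + ys ! 1)"
    by (rule cf_cong[OF A]) (simp only: B, auto simp: length_Suc_conv)
  then show ?thesis by (simp add: numeral_2_eq_2)
qed

lemma cf_add: "cf n g1 \<Longrightarrow> cf n g2 \<Longrightarrow> cf n (\<lambda>xs. g1 xs + g2 xs)"
  using cf_lift2[OF cf_add2] .

lemma cf_pred1: "cf 1 (\<lambda>ys. ys ! 0 - 1)"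
proof -
  have A: "cf (Suc 0) (\<lambda>xs. precf (\<lambda>ys. 0) (\<lambda>zs. zs ! 0) (hd xs) (tl xs))"
    by (rule cf_prec) (auto intro: cf_proj cf_const)
  have B: "precf (\<lambda>ys. 0) (\<lambda>zs. zs ! 0) k ys = k - 1" for k ys
    by (induction k) auto
  have "cf (Suc 0) (\<lambda>ys. ys ! 0 - 1)"
    by (rule cf_cong[OF A]) (simp only: B, auto simp: length_Suc_conv)
  then show ?thesis by simp
qed

lemma cf_monus2: "cf 2 (\<lambda>ys. ys ! 0 - ys ! 1)"
proof -
  have A: "cf (Suc 1) (\<lambda>xs. precf (\<lambda>ys. ys ! 0) (\<lambda>zs. zs ! 1 - 1) (hd xs) (tl xs))"
    by (rule cf_prec) (rule cf_proj, simp, rule cf_lift1[OF cf_pred1], rule cf_proj, simp)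
  have B: "precf (\<lambda>ys. ys ! 0) (\<lambda>zs. zs ! 1 - 1) k ys = ys ! 0 - k" for k ys
    by (induction k) auto
  have "cf (Suc 1) (\<lambda>xs. xs ! 1 - xs ! 0)"
    by (rule cf_cong[OF A]) (simp only: B, auto simp: length_Suc_conv)
  then have "cf 2 (\<lambda>xs. xs ! 1 - xs ! 0)" by (simp add: numeral_2_eq_2)
  from cf_lift2[OF this cf_proj[of 1 2] cf_proj[of 0 2]] show ?thesis
    by simp
qed

lemma cf_monus: "cf n g1 \<Longrightarrow> cf n g2 \<Longrightarrow> cf n (\<lambda>xs. g1 xs - g2 xs)"
  using cf_lift2[OF cf_monus2] .

lemma cf_mult2: "cf 2 (\<lambda>ys. ys ! 0 * ys ! 1)"
proof -
  have A: "cf (Suc 1) (\<lambda>xs. precf (\<lambda>ys. 0) (\<lambda>zs. zs ! 1 + zs ! 2) (hd xs) (tl xs))"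
    by (rule cf_prec) (auto intro!: cf_proj cf_add cf_const)
  have B: "precf (\<lambda>ys. 0) (\<lambda>zs. zs ! 1 + zs ! 2) k ys = k * ys ! 0" for k ys
    by (induction k) auto
  have "cf (Suc 1) (\<lambda>ys. ys ! 0 * ys ! 1)"
    by (rule cf_cong[OF A]) (simp only: B, auto simp: length_Suc_conv)
  then show ?thesis by (simp add: numeral_2_eq_2)
qed

lemma cf_mult: "cf n g1 \<Longrightarrow> cf n g2 \<Longrightarrow> cf n (\<lambda>xs. g1 xs * g2 xs)"
  using cf_lift2[OF cf_mult2] .

lemma cf_pow2: "cf 1 (\<lambda>ys. 2 ^ (ys ! 0))"
proof -
  have A: "cf (Suc 0) (\<lambda>xs. precf (\<lambda>ys. 1) (\<lambda>zs. 2 * zs ! 1) (hd xs) (tl xs))"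
    by (rule cf_prec) (auto intro!: cf_proj cf_mult cf_const)
  have B: "precf (\<lambda>ys. 1) (\<lambda>zs. 2 * zs ! 1) k ys = 2 ^ k" for k ys
    by (induction k) auto
  have "cf (Suc 0) (\<lambda>ys. 2 ^ (ys ! 0))"
    by (rule cf_cong[OF A]) (simp only: B, auto simp: length_Suc_conv)
  then show ?thesis by simp
qed

lemma cf_power2: "cf n g1 \<Longrightarrow> cf n (\<lambda>xs. 2 ^ g1 xs)"
  using cf_lift1[OF cf_pow2] .

lemma cf_sum:
  assumes "cf (Suc n) (\<lambda>ys. G (ys ! 0) (tl ys))" "cf n h"
  shows "cf n (\<lambda>xs. \<Sum>i<h xs. G i xs)"
proof -
  let ?s = "\<lambda>zs. zs ! 1 + G (zs ! 0) (tl (tl zs))"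
  have "cf (Suc (Suc n)) (\<lambda>zs. (\<lambda>ys. G (ys ! 0) (tl ys)) (zs ! 0 # tl (tl zs)))"
    by (rule cf_skip[OF assms(1)])
  then have "cf (Suc (Suc n)) ?s" by (intro cf_add cf_proj) auto
  then have A: "cf (Suc n) (\<lambda>xs. precf (\<lambda>ys. 0) ?s (hd xs) (tl xs))"
    by (intro cf_prec cf_const)
  have B: "precf (\<lambda>ys. 0) ?s k ys = (\<Sum>i<k. G i ys)" for k ys
    by (induction k) auto
  have "cf (Suc n) (\<lambda>xs. \<Sum>i<hd xs. G i (tl xs))"
    by (rule cf_cong[OF A]) (simp only: B)
  from cf_cons[OF this assms(2)] show ?thesis by simp
qed

lemma cf_recnat:
  assumes "cf n B" "cf (Suc (Suc n)) (\<lambda>ys. S (ys ! 0) (ys ! 1) (tl (tl ys)))" "cf n h"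
  shows "cf n (\<lambda>xs. rec_nat (B xs) (\<lambda>k acc. S k acc xs) (h xs))"
proof -
  let ?s = "\<lambda>ys. S (ys ! 0) (ys ! 1) (tl (tl ys))"
  have A: "cf (Suc n) (\<lambda>xs. precf B ?s (hd xs) (tl xs))" by (rule cf_prec[OF assms(1,2)])
  have B: "precf B ?s k ys = rec_nat (B ys) (\<lambda>k acc. S k acc ys) k" for k ys
    by (induction k) auto
  have "cf (Suc n) (\<lambda>xs. rec_nat (B (tl xs)) (\<lambda>k acc. S k acc (tl xs)) (hd xs))"
    by (rule cf_cong[OF A]) (simp only: B)
  from cf_cons[OF this assms(3)] show ?thesis by simp
qed

lemma cf_if: assumes "cfp n P" "cf n a" "cf n b" shows "cf n (\<lambda>xs. if P xs then a xs else b xs)"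
proof -
  have c: "cf n (\<lambda>xs. if P xs then 1 else 0)" using assms(1) unfolding cfp_def .
  have "cf n (\<lambda>xs. (if P xs then 1 else 0) * a xs + (1 - (if P xs then 1 else 0)) * b xs)"
    by (intro cf_add cf_mult cf_monus cf_const c assms(2,3))
  then show ?thesis by (rule cf_cong) auto
qed

lemma cfp_eq: assumes "cf n a" "cf n b" shows "cfp n (\<lambda>xs. a xs = b xs)"
proof -
  have "cf n (\<lambda>xs. 1 - ((a xs - b xs) + (b xs - a xs)))"
    by (intro cf_add cf_monus cf_const assms)
  then show ?thesis unfolding cfp_def by (rule cf_cong) auto
qed

lemma cfp_le: assumes "cf n a" "cf n b" shows "cfp n (\<lambda>xs. a xs \<le> b xs)"
proof -
  have "cf n (\<lambda>xs. 1 - (a xs - b xs))"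
    by (intro cf_add cf_monus cf_const assms)
  then show ?thesis unfolding cfp_def by (rule cf_cong) auto
qed

lemma cfp_less: assumes "cf n a" "cf n b" shows "cfp n (\<lambda>xs. a xs < b xs)"
proof -
  have "cf n (\<lambda>xs. 1 - (Suc (a xs) - b xs))"
    by (intro cf_Suc cf_monus cf_const assms)
  then show ?thesis unfolding cfp_def by (rule cf_cong) auto
qed

lemma cfp_conj: assumes "cfp n P" "cfp n Q" shows "cfp n (\<lambda>xs. P xs \<and> Q xs)"
proof -
  have "cf n (\<lambda>xs. (if P xs then 1 else 0) * (if Q xs then 1 else 0))"
    using assms unfolding cfp_def by (intro cf_mult)
  then show ?thesis unfolding cfp_def by (rule cf_cong) auto
qed

lemma cfp_not: assumes "cfp n P" shows "cfp n (\<lambda>xs. \<not> P xs)"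
proof -
  have "cf n (\<lambda>xs. 1 - (if P xs then 1 else 0))"
    using assms unfolding cfp_def by (intro cf_monus cf_const)
  then show ?thesis unfolding cfp_def by (rule cf_cong) auto
qed

lemma cfp_cong: "cfp n P \<Longrightarrow> (\<And>xs. length xs = n \<Longrightarrow> P xs = Q xs) \<Longrightarrow> cfp n Q"
  unfolding cfp_def by (erule cf_cong) simp

lemma cfp_disj: assumes "cfp n P" "cfp n Q" shows "cfp n (\<lambda>xs. P xs \<or> Q xs)"
proof -
  have "cfp n (\<lambda>xs. \<not> (\<not> P xs \<and> \<not> Q xs))" by (intro cfp_not cfp_conj assms)
  then show ?thesis by (rule cfp_cong) blast
qed

lemma cfp_imp: assumes "cfp n P" "cfp n Q" shows "cfp n (\<lambda>xs. P xs \<longrightarrow> Q xs)"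
proof -
  have "cfp n (\<lambda>xs. \<not> P xs \<or> Q xs)" by (intro cfp_not cfp_disj assms)
  then show ?thesis by (rule cfp_cong) blast
qed

lemma cfp_const: "cfp n (\<lambda>xs. c)"
  unfolding cfp_def by (rule cf_const)

lemma cfp_all:
  assumes "cfp (Suc n) (\<lambda>ys. P (ys ! 0) (tl ys))" "cf n h"
  shows "cfp n (\<lambda>xs. \<forall>i<h xs. P i xs)"
proof -
  have "cf n (\<lambda>xs. if (\<Sum>i<h xs. if P i xs then 0 else 1) = (0::nat) then 1 else 0)"
    by (intro cf_if cfp_eq cf_sum cf_const assms)
  then show ?thesis unfolding cfp_def by (rule cf_cong) auto
qed

lemma cfp_ex:
  assumes "cfp (Suc n) (\<lambda>ys. P (ys ! 0) (tl ys))" "cf n h"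
  shows "cfp n (\<lambda>xs. \<exists>i<h xs. P i xs)"
proof -
  have "cfp n (\<lambda>xs. \<not> (\<forall>i<h xs. \<not> P i xs))"
    by (intro cfp_not cfp_all cfp_not assms)
  then show ?thesis by (rule cfp_cong) blast
qed

lemma cf_proj0: "j < n \<Longrightarrow> cf n (\<lambda>ys. ys ! j)"
  by (rule cf_proj)

lemma cf_proj1: "Suc (j) < n \<Longrightarrow> cf n (\<lambda>ys. tl (ys) ! j)"
proof -
  assume a: "Suc (j) < n"
  have "cf (n - 1) (\<lambda>ys. ys ! j)" by (rule cf_proj0) (use a in simp)
  note c = this
  have e: "Suc (n - 1) = n" using a by simp
  from cf_tl[OF c] show ?thesis unfolding e .
qed

lemma cf_proj2: "Suc (Suc (j)) < n \<Longrightarrow> cf n (\<lambda>ys. tl (tl (ys)) ! j)"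
proof -
  assume a: "Suc (Suc (j)) < n"
  have "cf (n - 1) (\<lambda>ys. tl (ys) ! j)" by (rule cf_proj1) (use a in simp)
  note c = this
  have e: "Suc (n - 1) = n" using a by simp
  from cf_tl[OF c] show ?thesis unfolding e .
qed

lemma cf_proj3: "Suc (Suc (Suc (j))) < n \<Longrightarrow> cf n (\<lambda>ys. tl (tl (tl (ys))) ! j)"
proof -
  assume a: "Suc (Suc (Suc (j))) < n"
  have "cf (n - 1) (\<lambda>ys. tl (tl (ys)) ! j)" by (rule cf_proj2) (use a in simp)
  note c = this
  have e: "Suc (n - 1) = n" using a by simp
  from cf_tl[OF c] show ?thesis unfolding e .
qed

lemma cf_proj4: "Suc (Suc (Suc (Suc (j)))) < n \<Longrightarrow> cf n (\<lambda>ys. tl (tl (tl (tl (ys)))) ! j)"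
proof -
  assume a: "Suc (Suc (Suc (Suc (j)))) < n"
  have "cf (n - 1) (\<lambda>ys. tl (tl (tl (ys))) ! j)" by (rule cf_proj3) (use a in simp)
  note c = this
  have e: "Suc (n - 1) = n" using a by simp
  from cf_tl[OF c] show ?thesis unfolding e .
qed

lemma cf_proj5: "Suc (Suc (Suc (Suc (Suc (j))))) < n \<Longrightarrow> cf n (\<lambda>ys. tl (tl (tl (tl (tl (ys))))) ! j)"
proof -
  assume a: "Suc (Suc (Suc (Suc (Suc (j))))) < n"
  have "cf (n - 1) (\<lambda>ys. tl (tl (tl (tl (ys)))) ! j)" by (rule cf_proj4) (use a in simp)
  note c = this
  have e: "Suc (n - 1) = n" using a by simp
  from cf_tl[OF c] show ?thesis unfolding e .
qed

lemma cf_proj6: "Suc (Suc (Suc (Suc (Suc (Suc (j)))))) < n \<Longrightarrow> cf n (\<lambda>ys. tl (tl (tl (tl (tl (tl (ys)))))) ! j)"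
proof -
  assume a: "Suc (Suc (Suc (Suc (Suc (Suc (j)))))) < n"
  have "cf (n - 1) (\<lambda>ys. tl (tl (tl (tl (tl (ys))))) ! j)" by (rule cf_proj5) (use a in simp)
  note c = this
  have e: "Suc (n - 1) = n" using a by simp
  from cf_tl[OF c] show ?thesis unfolding e .
qed

lemmas cf_projs = cf_proj0 cf_proj1 cf_proj2 cf_proj3 cf_proj4 cf_proj5 cf_proj6

lemmas cf_rules = cf_projs cf_const cf_add cf_monus cf_mult cf_power2 cf_Suc cf_sum cf_recnat cf_if
  cfp_eq cfp_le cfp_less cfp_conj cfp_not cfp_disj cfp_imp cfp_all cfp_ex cfp_const



named_theorems cfi

lemma cf_lift8:
  assumes "cf 8 (\<lambda>ys. F (ys ! 0) (ys ! 1) (ys ! 2) (ys ! 3) (ys ! 4) (ys ! 5) (ys ! 6) (ys ! 7))"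
    "cf n g1" "cf n g2" "cf n g3" "cf n g4" "cf n g5" "cf n g6" "cf n g7" "cf n g8"
  shows "cf n (\<lambda>xs. F (g1 xs) (g2 xs) (g3 xs) (g4 xs) (g5 xs) (g6 xs) (g7 xs) (g8 xs))"
  using cf_comp[of "[g1,g2,g3,g4,g5,g6,g7,g8]" "\<lambda>ys. F (ys ! 0) (ys ! 1) (ys ! 2) (ys ! 3) (ys ! 4) (ys ! 5) (ys ! 6) (ys ! 7)" n] assms
  by (simp add: eval_nat_numeral)

lemma cfp_lift1: "cfp 1 (\<lambda>ys. P (ys ! 0)) \<Longrightarrow> cf n g1 \<Longrightarrow> cfp n (\<lambda>xs. P (g1 xs))"
  unfolding cfp_def by (rule cf_lift1[where F="\<lambda>a. if P a then 1 else 0"])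
lemma cfp_lift2: "cfp 2 (\<lambda>ys. P (ys ! 0) (ys ! 1)) \<Longrightarrow> cf n g1 \<Longrightarrow> cf n g2 \<Longrightarrow> cfp n (\<lambda>xs. P (g1 xs) (g2 xs))"
  unfolding cfp_def by (rule cf_lift2[where F="\<lambda>a b. if P a b then 1 else 0"])
lemma cfp_lift3: "cfp 3 (\<lambda>ys. P (ys ! 0) (ys ! 1) (ys ! 2)) \<Longrightarrow> cf n g1 \<Longrightarrow> cf n g2 \<Longrightarrow> cf n g3 \<Longrightarrow> cfp n (\<lambda>xs. P (g1 xs) (g2 xs) (g3 xs))"
  unfolding cfp_def by (rule cf_lift3[where F="\<lambda>a b c. if P a b c then 1 else 0"])
lemma cfp_lift4: "cfp 4 (\<lambda>ys. P (ys ! 0) (ys ! 1) (ys ! 2) (ys ! 3)) \<Longrightarrow> cf n g1 \<Longrightarrow> cf n g2 \<Longrightarrow> cf n g3 \<Longrightarrow> cf n g4 \<Longrightarrow> cfp n (\<lambda>xs. P (g1 xs) (g2 xs) (g3 xs) (g4 xs))"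
  unfolding cfp_def by (rule cf_lift4[where F="\<lambda>a b c d. if P a b c d then 1 else 0"])
lemma cfp_lift5: "cfp 5 (\<lambda>ys. P (ys ! 0) (ys ! 1) (ys ! 2) (ys ! 3) (ys ! 4)) \<Longrightarrow> cf n g1 \<Longrightarrow> cf n g2 \<Longrightarrow> cf n g3 \<Longrightarrow> cf n g4 \<Longrightarrow> cf n g5 \<Longrightarrow> cfp n (\<lambda>xs. P (g1 xs) (g2 xs) (g3 xs) (g4 xs) (g5 xs))"
  unfolding cfp_def by (rule cf_lift5[where F="\<lambda>a b c d e. if P a b c d e then 1 else 0"])
lemma cfp_lift7: "cfp 7 (\<lambda>ys. P (ys ! 0) (ys ! 1) (ys ! 2) (ys ! 3) (ys ! 4) (ys ! 5) (ys ! 6)) \<Longrightarrow> cf n g1 \<Longrightarrow> cf n g2 \<Longrightarrow> cf n g3 \<Longrightarrow> cf n g4 \<Longrightarrow> cf n g5 \<Longrightarrow> cf n g6 \<Longrightarrow> cf n g7 \<Longrightarrow> cfp n (\<lambda>xs. P (g1 xs) (g2 xs) (g3 xs) (g4 xs) (g5 xs) (g6 xs) (g7 xs))"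
  unfolding cfp_def by (rule cf_lift7[where F="\<lambda>a b c d e f g. if P a b c d e f g then 1 else 0"])
lemma cfp_lift8: "cfp 8 (\<lambda>ys. P (ys ! 0) (ys ! 1) (ys ! 2) (ys ! 3) (ys ! 4) (ys ! 5) (ys ! 6) (ys ! 7)) \<Longrightarrow> cf n g1 \<Longrightarrow> cf n g2 \<Longrightarrow> cf n g3 \<Longrightarrow> cf n g4 \<Longrightarrow> cf n g5 \<Longrightarrow> cf n g6 \<Longrightarrow> cf n g7 \<Longrightarrow> cf n g8 \<Longrightarrow> cfp n (\<lambda>xs. P (g1 xs) (g2 xs) (g3 xs) (g4 xs) (g5 xs) (g6 xs) (g7 xs) (g8 xs))"
  unfolding cfp_def by (rule cf_lift8[where F="\<lambda>a b c d e f g h. if P a b c d e f g h then 1 else 0"])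


definition divN :: "nat \<Rightarrow> nat \<Rightarrow> nat" where
  "divN S m = (\<Sum>i<S. if Suc i * m \<le> S then 1 else 0)"

lemma divN_base: "cf 2 (\<lambda>ys. divN (ys ! 0) (ys ! 1))"
  unfolding divN_def by (intro cf_rules cfi; simp)
lemmas cf_divN[cfi] = cf_lift2[OF divN_base]

definition memb :: "nat \<Rightarrow> nat \<Rightarrow> bool" where
  "memb x S \<longleftrightarrow> (\<exists>j<divN S (2 ^ x). divN S (2 ^ x) = Suc (2 * j))"

lemma memb_base: "cfp 2 (\<lambda>ys. memb (ys ! 0) (ys ! 1))"
  unfolding memb_def by (intro cf_rules cfi; simp)
lemmas cfp_memb[cfi] = cfp_lift2[OF memb_base]

definition peN :: "nat \<Rightarrow> nat \<Rightarrow> nat" where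
  "peN a b = (\<Sum>i<Suc (a + b). i) + a"

lemma peN_base: "cf 2 (\<lambda>ys. peN (ys ! 0) (ys ! 1))"
  unfolding peN_def by (intro cf_rules cfi; simp)
lemmas cf_peN[cfi] = cf_lift2[OF peN_base]

definition fstd :: "nat \<Rightarrow> nat" where
  "fstd c = (\<Sum>a<Suc c. if (\<exists>b<Suc c. peN a b = c) then a else 0)"
definition sndd :: "nat \<Rightarrow> nat" where
  "sndd c = (\<Sum>b<Suc c. if (\<exists>a<Suc c. peN a b = c) then b else 0)"

lemma fstd_base: "cf 1 (\<lambda>ys. fstd (ys ! 0))"
  unfolding fstd_def by (intro cf_rules cfi; simp)
lemmas cf_fstd[cfi] = cf_lift1[OF fstd_base]
lemma sndd_base: "cf 1 (\<lambda>ys. sndd (ys ! 0))"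
  unfolding sndd_def by (intro cf_rules cfi; simp)
lemmas cf_sndd[cfi] = cf_lift1[OF sndd_base]



definition stc :: "nat \<Rightarrow> nat" where "stc n = fstd (n - 1)"
definition ini :: "nat \<Rightarrow> nat" where "ini n = fstd (sndd (n - 1) - 1)"
definition trc :: "nat \<Rightarrow> nat" where "trc n = fstd (sndd (sndd (n - 1) - 1) - 1)"
definition inc :: "nat \<Rightarrow> nat" where "inc n = fstd (sndd (sndd (sndd (n - 1) - 1) - 1) - 1)"
definition srcN :: "nat \<Rightarrow> nat" where "srcN c = fstd c"
definition labN :: "nat \<Rightarrow> nat" where "labN c = fstd (sndd c)"
definition tgtN :: "nat \<Rightarrow> nat" where "tgtN c = sndd (sndd c)"
definition indN :: "nat \<Rightarrow> nat \<Rightarrow> nat \<Rightarrow> bool" where "indN n c d \<longleftrightarrow> memb (peN c d) (inc n)"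
definition stepN :: "nat \<Rightarrow> nat \<Rightarrow> nat \<Rightarrow> nat \<Rightarrow> bool" where
  "stepN n m t c \<longleftrightarrow> (m = 0 \<and> t = 0 \<and> srcN c = ini n) \<or>
     (m = 0 \<and> t \<noteq> 0 \<and> tgtN (t - 1) = srcN c \<and> \<not> indN n (t - 1) c) \<or>
     (m \<noteq> 0 \<and> t \<noteq> 0 \<and> tgtN (t - 1) = srcN c \<and> indN n (t - 1) c)"
definition XsN :: "nat \<Rightarrow> nat \<Rightarrow> nat" where
  "XsN n s = (\<Sum>c<trc n. if memb c (trc n) \<and> srcN c = s then 2 ^ c else 0)"
definition otN :: "nat \<Rightarrow> nat \<Rightarrow> nat \<Rightarrow> bool" where
  "otN n c d \<longleftrightarrow> srcN c = srcN d \<and> indN n c d"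
definition subN :: "nat \<Rightarrow> nat \<Rightarrow> bool" where
  "subN M R \<longleftrightarrow> (\<forall>c<M. memb c M \<longrightarrow> memb c R)"
definition sqsubN :: "nat \<Rightarrow> nat \<Rightarrow> nat \<Rightarrow> bool" where
  "sqsubN n M R \<longleftrightarrow> subN M R \<and> \<not> (\<exists>c<R. memb c R \<and> \<not> memb c M \<and> (\<forall>d<M. memb d M \<longrightarrow> otN n c d))"
definition cfreeN :: "nat \<Rightarrow> nat \<Rightarrow> bool" where
  "cfreeN n M \<longleftrightarrow> subN M (trc n) \<and> (\<exists>s<Suc M. \<forall>c<M. memb c M \<longrightarrow> srcN c = s) \<and>
     (\<forall>c<M. memb c M \<longrightarrow> (\<forall>d<M. memb d M \<longrightarrow> c \<noteq> d \<longrightarrow> otN n c d))"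
definition supN :: "nat \<Rightarrow> nat \<Rightarrow> bool" where
  "supN n M \<longleftrightarrow> (\<exists>s<Suc (trc n). M = XsN n s) \<or> (M \<noteq> 0 \<and> cfreeN n M)"
definition procN :: "nat \<Rightarrow> nat \<Rightarrow> bool" where
  "procN n M \<longleftrightarrow> (\<exists>s<stc n. memb s (stc n) \<and> M = XsN n s) \<or>
     (supN n M \<and> (\<exists>s<stc n. memb s (stc n) \<and> sqsubN n M (XsN n s)))"
definition validN :: "nat \<Rightarrow> nat \<Rightarrow> nat \<Rightarrow> bool" where
  "validN n R t \<longleftrightarrow> subN R (trc n) \<and> (t = 0 \<or> memb (t - 1) (trc n))"
definition pc4 :: "nat \<Rightarrow> nat \<Rightarrow> nat \<Rightarrow> nat \<Rightarrow> nat" where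
  "pc4 a b c d = peN (peN a b) (peN c d)"
definition inT :: "nat \<Rightarrow> nat \<Rightarrow> nat \<Rightarrow> nat \<Rightarrow> nat \<Rightarrow> bool" where
  "inT Tb a b c d \<longleftrightarrow> memb (pc4 a b c d) Tb"

definition dia1 :: "nat \<Rightarrow> nat \<Rightarrow> nat \<Rightarrow> nat \<Rightarrow> nat \<Rightarrow> nat \<Rightarrow> nat \<Rightarrow> nat \<Rightarrow> bool" where
  "dia1 n1 n2 Tb m R1 t1 R2 t2 \<longleftrightarrow> (\<forall>c<R1. memb c R1 \<and> stepN n1 m t1 c \<longrightarrow>
     (\<exists>d<R2. memb d R2 \<and> labN d = labN c \<and> stepN n2 m t2 d \<and>
        inT Tb (XsN n1 (tgtN c)) (Suc c) (XsN n2 (tgtN d)) (Suc d)))"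
definition dia2 :: "nat \<Rightarrow> nat \<Rightarrow> nat \<Rightarrow> nat \<Rightarrow> nat \<Rightarrow> nat \<Rightarrow> nat \<Rightarrow> nat \<Rightarrow> bool" where
  "dia2 n1 n2 Tb m R1 t1 R2 t2 \<longleftrightarrow> (\<forall>d<R2. memb d R2 \<and> stepN n2 m t2 d \<longrightarrow>
     (\<exists>c<R1. memb c R1 \<and> labN c = labN d \<and> stepN n1 m t1 c \<and>
        inT Tb (XsN n1 (tgtN c)) (Suc c) (XsN n2 (tgtN d)) (Suc d)))"
definition ot1 :: "nat \<Rightarrow> nat \<Rightarrow> nat \<Rightarrow> nat \<Rightarrow> nat \<Rightarrow> nat \<Rightarrow> nat \<Rightarrow> bool" where
  "ot1 n1 n2 Tb R1 t1 R2 t2 \<longleftrightarrow> (\<forall>M<Suc R1. procN n1 M \<and> sqsubN n1 M R1 \<longrightarrow>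
     (\<exists>M'<Suc R2. procN n2 M' \<and> sqsubN n2 M' R2 \<and> inT Tb M t1 M' t2))"
definition ot2 :: "nat \<Rightarrow> nat \<Rightarrow> nat \<Rightarrow> nat \<Rightarrow> nat \<Rightarrow> nat \<Rightarrow> nat \<Rightarrow> bool" where
  "ot2 n1 n2 Tb R1 t1 R2 t2 \<longleftrightarrow> (\<forall>M'<Suc R2. procN n2 M' \<and> sqsubN n2 M' R2 \<longrightarrow>
     (\<exists>M<Suc R1. procN n1 M \<and> sqsubN n1 M R1 \<and> inT Tb M t1 M' t2))"
definition condN :: "nat \<Rightarrow> nat \<Rightarrow> nat \<Rightarrow> nat \<Rightarrow> nat \<Rightarrow> nat \<Rightarrow> nat \<Rightarrow> bool" where
  "condN n1 n2 Tb R1 t1 R2 t2 \<longleftrightarrow> inT Tb R1 t1 R2 t2 \<and>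
     dia1 n1 n2 Tb 0 R1 t1 R2 t2 \<and> dia2 n1 n2 Tb 0 R1 t1 R2 t2 \<and>
     dia1 n1 n2 Tb 1 R1 t1 R2 t2 \<and> dia2 n1 n2 Tb 1 R1 t1 R2 t2 \<and>
     ot1 n1 n2 Tb R1 t1 R2 t2 \<and> ot2 n1 n2 Tb R1 t1 R2 t2"
definition tabN :: "nat \<Rightarrow> nat \<Rightarrow> nat \<Rightarrow> nat \<Rightarrow> nat" where
  "tabN n1 n2 Tb fl = (\<Sum>a<Suc (trc n1). \<Sum>b<Suc (trc n1). \<Sum>c<Suc (trc n2). \<Sum>d<Suc (trc n2).
     if validN n1 a b \<and> validN n2 c d \<and> (fl = 0 \<or> condN n1 n2 Tb a b c d) then 2 ^ pc4 a b c d else 0)"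
definition Tab :: "nat \<Rightarrow> nat \<Rightarrow> nat \<Rightarrow> nat" where
  "Tab n1 n2 k = rec_nat (tabN n1 n2 0 0) (\<lambda>_ acc. tabN n1 n2 acc 1) k"
definition Bd :: "nat \<Rightarrow> nat \<Rightarrow> nat" where
  "Bd n1 n2 = Suc (trc n1) * Suc (trc n1) * Suc (trc n2) * Suc (trc n2)"
definition dec :: "nat \<Rightarrow> nat \<Rightarrow> nat" where
  "dec n1 n2 = (if inT (Tab n1 n2 (Bd n1 n2)) (XsN n1 (ini n1)) 0 (XsN n2 (ini n2)) 0 then 1 else 0)"

lemma stc_base: "cf 1 (\<lambda>ys. stc (ys ! 0))"
  unfolding stc_def by (intro cf_rules cfi; simp)
lemmas cf_stc[cfi] = cf_lift1[OF stc_base]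
lemma ini_base: "cf 1 (\<lambda>ys. ini (ys ! 0))"
  unfolding ini_def by (intro cf_rules cfi; simp)
lemmas cf_ini[cfi] = cf_lift1[OF ini_base]
lemma trc_base: "cf 1 (\<lambda>ys. trc (ys ! 0))"
  unfolding trc_def by (intro cf_rules cfi; simp)
lemmas cf_trc[cfi] = cf_lift1[OF trc_base]
lemma inc_base: "cf 1 (\<lambda>ys. inc (ys ! 0))"
  unfolding inc_def by (intro cf_rules cfi; simp)
lemmas cf_inc[cfi] = cf_lift1[OF inc_base]
lemma srcN_base: "cf 1 (\<lambda>ys. srcN (ys ! 0))"
  unfolding srcN_def by (intro cf_rules cfi; simp)
lemmas cf_srcN[cfi] = cf_lift1[OF srcN_base]
lemma labN_base: "cf 1 (\<lambda>ys. labN (ys ! 0))"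
  unfolding labN_def by (intro cf_rules cfi; simp)
lemmas cf_labN[cfi] = cf_lift1[OF labN_base]
lemma tgtN_base: "cf 1 (\<lambda>ys. tgtN (ys ! 0))"
  unfolding tgtN_def by (intro cf_rules cfi; simp)
lemmas cf_tgtN[cfi] = cf_lift1[OF tgtN_base]
lemma indN_base: "cfp 3 (\<lambda>ys. indN (ys ! 0) (ys ! 1) (ys ! 2))"
  unfolding indN_def by (intro cf_rules cfi; simp)
lemmas cfp_indN[cfi] = cfp_lift3[OF indN_base]
lemma stepN_base: "cfp 4 (\<lambda>ys. stepN (ys ! 0) (ys ! 1) (ys ! 2) (ys ! 3))"
  unfolding stepN_def by (intro cf_rules cfi; simp)
lemmas cfp_stepN[cfi] = cfp_lift4[OF stepN_base]
lemma XsN_base: "cf 2 (\<lambda>ys. XsN (ys ! 0) (ys ! 1))"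
  unfolding XsN_def by (intro cf_rules cfi; simp)
lemmas cf_XsN[cfi] = cf_lift2[OF XsN_base]
lemma otN_base: "cfp 3 (\<lambda>ys. otN (ys ! 0) (ys ! 1) (ys ! 2))"
  unfolding otN_def by (intro cf_rules cfi; simp)
lemmas cfp_otN[cfi] = cfp_lift3[OF otN_base]
lemma subN_base: "cfp 2 (\<lambda>ys. subN (ys ! 0) (ys ! 1))"
  unfolding subN_def by (intro cf_rules cfi; simp)
lemmas cfp_subN[cfi] = cfp_lift2[OF subN_base]
lemma sqsubN_base: "cfp 3 (\<lambda>ys. sqsubN (ys ! 0) (ys ! 1) (ys ! 2))"
  unfolding sqsubN_def by (intro cf_rules cfi; simp)
lemmas cfp_sqsubN[cfi] = cfp_lift3[OF sqsubN_base]
lemma cfreeN_base: "cfp 2 (\<lambda>ys. cfreeN (ys ! 0) (ys ! 1))"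
  unfolding cfreeN_def by (intro cf_rules cfi; simp)
lemmas cfp_cfreeN[cfi] = cfp_lift2[OF cfreeN_base]
lemma supN_base: "cfp 2 (\<lambda>ys. supN (ys ! 0) (ys ! 1))"
  unfolding supN_def by (intro cf_rules cfi; simp)
lemmas cfp_supN[cfi] = cfp_lift2[OF supN_base]
lemma procN_base: "cfp 2 (\<lambda>ys. procN (ys ! 0) (ys ! 1))"
  unfolding procN_def by (intro cf_rules cfi; simp)
lemmas cfp_procN[cfi] = cfp_lift2[OF procN_base]
lemma validN_base: "cfp 3 (\<lambda>ys. validN (ys ! 0) (ys ! 1) (ys ! 2))"
  unfolding validN_def by (intro cf_rules cfi; simp)
lemmas cfp_validN[cfi] = cfp_lift3[OF validN_base]
lemma pc4_base: "cf 4 (\<lambda>ys. pc4 (ys ! 0) (ys ! 1) (ys ! 2) (ys ! 3))"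
  unfolding pc4_def by (intro cf_rules cfi; simp)
lemmas cf_pc4[cfi] = cf_lift4[OF pc4_base]
lemma inT_base: "cfp 5 (\<lambda>ys. inT (ys ! 0) (ys ! 1) (ys ! 2) (ys ! 3) (ys ! 4))"
  unfolding inT_def by (intro cf_rules cfi; simp)
lemmas cfp_inT[cfi] = cfp_lift5[OF inT_base]
lemma dia1_base: "cfp 8 (\<lambda>ys. dia1 (ys ! 0) (ys ! 1) (ys ! 2) (ys ! 3) (ys ! 4) (ys ! 5) (ys ! 6) (ys ! 7))"
  unfolding dia1_def by (intro cf_rules cfi; simp)
lemmas cfp_dia1[cfi] = cfp_lift8[OF dia1_base]
lemma dia2_base: "cfp 8 (\<lambda>ys. dia2 (ys ! 0) (ys ! 1) (ys ! 2) (ys ! 3) (ys ! 4) (ys ! 5) (ys ! 6) (ys ! 7))"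
  unfolding dia2_def by (intro cf_rules cfi; simp)
lemmas cfp_dia2[cfi] = cfp_lift8[OF dia2_base]
lemma ot1_base: "cfp 7 (\<lambda>ys. ot1 (ys ! 0) (ys ! 1) (ys ! 2) (ys ! 3) (ys ! 4) (ys ! 5) (ys ! 6))"
  unfolding ot1_def by (intro cf_rules cfi; simp)
lemmas cfp_ot1[cfi] = cfp_lift7[OF ot1_base]
lemma ot2_base: "cfp 7 (\<lambda>ys. ot2 (ys ! 0) (ys ! 1) (ys ! 2) (ys ! 3) (ys ! 4) (ys ! 5) (ys ! 6))"
  unfolding ot2_def by (intro cf_rules cfi; simp)
lemmas cfp_ot2[cfi] = cfp_lift7[OF ot2_base]
lemma condN_base: "cfp 7 (\<lambda>ys. condN (ys ! 0) (ys ! 1) (ys ! 2) (ys ! 3) (ys ! 4) (ys ! 5) (ys ! 6))"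
  unfolding condN_def by (intro cf_rules cfi; simp)
lemmas cfp_condN[cfi] = cfp_lift7[OF condN_base]
lemma tabN_base: "cf 4 (\<lambda>ys. tabN (ys ! 0) (ys ! 1) (ys ! 2) (ys ! 3))"
  unfolding tabN_def by (intro cf_rules cfi; simp)
lemmas cf_tabN[cfi] = cf_lift4[OF tabN_base]
lemma Tab_base: "cf 3 (\<lambda>ys. Tab (ys ! 0) (ys ! 1) (ys ! 2))"
  unfolding Tab_def by (intro cf_rules cfi; simp)
lemmas cf_Tab[cfi] = cf_lift3[OF Tab_base]
lemma Bd_base: "cf 2 (\<lambda>ys. Bd (ys ! 0) (ys ! 1))"
  unfolding Bd_def by (intro cf_rules cfi; simp)
lemmas cf_Bd[cfi] = cf_lift2[OF Bd_base]
lemma dec_base: "cf 2 (\<lambda>ys. dec (ys ! 0) (ys ! 1))"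
  unfolding dec_def by (intro cf_rules cfi; simp)



lemma divN_eq: assumes "0 < m" shows "divN S m = S div m"
proof -
  have "divN S m = card ({..<S} \<inter> {i. Suc i * m \<le> S})"
    unfolding divN_def by (simp add: sum.If_cases)
  also have "{..<S} \<inter> {i. Suc i * m \<le> S} = {..<S div m}"
  proof -
    have *: "{i. Suc i * m \<le> S} = {i. i < S div m}"
      using less_eq_div_iff_mult_less_eq[OF assms, of "Suc _" S] by (simp only: Suc_le_eq)
    have "S div m \<le> S" by simp
    then show ?thesis unfolding * by (auto intro: order.strict_trans2[OF _ div_le_dividend])
  qed
  finally show ?thesis by simp
qed

lemma memb_iff: "memb x S \<longleftrightarrow> x \<in> set_decode S"
proof -
  have "(\<exists>j<q. q = Suc (2 * j)) \<longleftrightarrow> odd q" for q :: nat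
    by (auto elim!: oddE)
  then show ?thesis unfolding memb_def set_decode_def by (simp add: divN_eq)
qed

lemma sum_tri: "(\<Sum>i<Suc k. i) = triangle k"
  by (induction k) auto

lemma peN_eq: "peN a b = prod_encode (a, b)"
  by (simp only: peN_def sum_tri) (simp add: prod_encode_def)

lemma fstd_pe[simp]: "fstd (prod_encode (a, b)) = a"
proof -
  let ?c = "prod_encode (a, b)"
  have *: "(\<exists>b'<Suc ?c. prod_encode (a', b') = ?c) \<longleftrightarrow> a' = a" for a'
    using le_prod_encode_1[of a b] le_prod_encode_2[where a=a and b=b] by auto
  have "a < Suc ?c" using le_prod_encode_1[of a b] by simp
  then show ?thesis unfolding fstd_def peN_eq * by simp
qed

lemma sndd_pe[simp]: "sndd (prod_encode (a, b)) = b"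
proof -
  let ?c = "prod_encode (a, b)"
  have *: "(\<exists>a'<Suc ?c. prod_encode (a', b') = ?c) \<longleftrightarrow> b' = b" for b'
    using le_prod_encode_1[of a b] le_prod_encode_2[where a=a and b=b] by auto
  have "b < Suc ?c" using le_prod_encode_2[where a=a and b=b] by simp
  then show ?thesis unfolding sndd_def peN_eq * by simp
qed

abbreviation E :: "trans \<Rightarrow> nat" where "E \<equiv> enc_trans"

lemma E_def': "E r = prod_encode (src r, prod_encode (lab r, tgt r))"
  by (simp add: enc_trans_def)

lemma srcN_E[simp]: "srcN (E r) = src r" and labN_E[simp]: "labN (E r) = lab r"
  and tgtN_E[simp]: "tgtN (E r) = tgt r"
  by (simp_all add: E_def' srcN_def labN_def tgtN_def)

lemma E_inj[simp]: "E r = E r' \<longleftrightarrow> r = r'"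
proof
  assume "E r = E r'"
  then have "src r = src r'" "lab r = lab r'" "tgt r = tgt r'"
    by (metis srcN_E labN_E tgtN_E)+
  then show "r = r'" by (cases r; cases r') (simp add: src_def lab_def tgt_def)
qed simp

lemma inj_E: "inj E" by (rule injI) simp

definition Cd :: "trans set \<Rightarrow> nat" where "Cd R = set_encode (E ` R)"

lemma mem_less: "finite A \<Longrightarrow> x \<in> A \<Longrightarrow> x < set_encode A"
proof -
  assume "finite A" "x \<in> A"
  then have "2 ^ x \<le> set_encode A" unfolding set_encode_def
    by (intro member_le_sum) auto
  moreover have "x < 2 ^ x" by simp
  ultimately show ?thesis by linarith
qed

lemma memb_Cd: "finite R \<Longrightarrow> memb c (Cd R) \<longleftrightarrow> c \<in> E ` R"
  by (simp add: memb_iff Cd_def)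

lemma memb_Cd_E[simp]: "finite R \<Longrightarrow> memb (E r) (Cd R) \<longleftrightarrow> r \<in> R"
  by (auto simp: memb_Cd)

lemma E_less_Cd: "finite R \<Longrightarrow> r \<in> R \<Longrightarrow> E r < Cd R"
  unfolding Cd_def by (rule mem_less) auto

lemma Cd_mono: "finite R \<Longrightarrow> M \<subseteq> R \<Longrightarrow> Cd M \<le> Cd R"
  unfolding Cd_def set_encode_def by (rule sum_mono2) auto

lemma Cd_inj: "finite M \<Longrightarrow> finite R \<Longrightarrow> Cd M = Cd R \<longleftrightarrow> M = R"
proof
  assume f: "finite M" "finite R" and "Cd M = Cd R"
  then have "set_decode (Cd M) = set_decode (Cd R)" by simp
  then have "E ` M = E ` R" using f by (simp add: Cd_def)
  then show "M = R" using inj_E by (simp add: inj_image_eq_iff)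
qed simp

lemma Cd_zero: "finite M \<Longrightarrow> Cd M = 0 \<longleftrightarrow> M = {}"
  using Cd_inj[of M "{}"] by (simp add: Cd_def)

lemma ball_Cd: "finite M \<Longrightarrow> (\<forall>c<Cd M. memb c (Cd M) \<longrightarrow> P c) \<longleftrightarrow> (\<forall>r\<in>M. P (E r))"
  by (auto simp: memb_Cd E_less_Cd)

lemma ball_Cd2: "finite M \<Longrightarrow> (\<forall>c<Cd M. memb c (Cd M) \<and> Q c \<longrightarrow> P c) \<longleftrightarrow> (\<forall>r\<in>M. Q (E r) \<longrightarrow> P (E r))"
  by (auto simp: memb_Cd E_less_Cd)

lemma bex_Cd: "finite M \<Longrightarrow> (\<exists>c<Cd M. memb c (Cd M) \<and> P c) \<longleftrightarrow> (\<exists>r\<in>M. P (E r))"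
  by (auto simp: memb_Cd) (meson E_less_Cd imageI)

lemma sum_set_encode:
  assumes "finite A" "A \<subseteq> {..<m}"
  shows "(\<Sum>c<m. if c \<in> A then (2::nat) ^ c else 0) = set_encode A"
proof -
  have "(\<Sum>c<m. if c \<in> A then (2::nat) ^ c else 0) = (\<Sum>c\<in>{c\<in>{..<m}. c \<in> A}. 2 ^ c)"
    by (rule sum.inter_filter[symmetric]) simp
  also have "{c\<in>{..<m}. c \<in> A} = A" using assms by auto
  finally show ?thesis by (simp add: set_encode_def)
qed

lemma decode_sub:
  assumes "finite R" "subN M (Cd R)"
  shows "M = Cd {r\<in>R. memb (E r) M}"
proof -
  have "set_decode M \<subseteq> E ` R"
  proof
    fix x assume x: "x \<in> set_decode M"
    then have "x < M" using mem_less[of "set_decode M" x] by simp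
    moreover have "memb x M" using x by (simp add: memb_iff)
    ultimately have "memb x (Cd R)" using assms(2) unfolding subN_def by blast
    then show "x \<in> E ` R" using assms(1) by (simp add: memb_Cd)
  qed
  then have "set_decode M = E ` {r\<in>R. memb (E r) M}" by (auto simp: memb_iff)
  then have "set_encode (set_decode M) = Cd {r\<in>R. memb (E r) M}" by (simp add: Cd_def)
  then show ?thesis by simp
qed

definition tc :: "trans option \<Rightarrow> nat" where
  "tc t = (case t of None \<Rightarrow> 0 | Some r \<Rightarrow> Suc (E r))"

definition stm :: "nat \<Rightarrow> tsi \<Rightarrow> trans option \<Rightarrow> trans \<Rightarrow> bool" where
  "stm m = (if m = 0 then leqA else ominusA)"

context
  fixes T :: tsi
  assumes fin: "finite_tsi T"
begin

lemma finTr: "finite (Tr T)" using fin by (simp add: finite_tsi_def)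
lemma finSt: "finite (St T)" using fin by (simp add: finite_tsi_def)
lemma finInd: "finite (Ind T)"
proof -
  have "Ind T \<subseteq> Tr T \<times> Tr T" using fin by (simp add: finite_tsi_def is_tsi_def)
  then show ?thesis using finTr by (meson finite_SigmaI finite_subset)
qed

lemma stc_N: "stc (enc_tsi T) = set_encode (St T)"
  and ini_N: "ini (enc_tsi T) = init T"
  and trc_N: "trc (enc_tsi T) = Cd (Tr T)"
  and inc_N: "inc (enc_tsi T) = set_encode ((\<lambda>(t, u). prod_encode (E t, E u)) ` Ind T)"
  by (simp_all add: enc_tsi_def stc_def ini_def trc_def inc_def Cd_def)

lemma finXs: "finite (Xs T s)" using finTr by (simp add: Xs_def)
lemma Xs_sub: "Xs T s \<subseteq> Tr T" by (auto simp: Xs_def)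

lemma indN_E: "indN (enc_tsi T) (E r) (E r') \<longleftrightarrow> (r, r') \<in> Ind T"
proof -
  have "inj_on (\<lambda>(t, u). prod_encode (E t, E u)) (Ind T)"
    by (auto simp: inj_on_def)
  then show ?thesis
    using finInd by (force simp: indN_def inc_N memb_iff peN_eq)
qed

lemma stepN_tc: "stepN (enc_tsi T) m (tc t) (E r) \<longleftrightarrow> stm m T t r"
  by (cases t) (auto simp: stepN_def tc_def stm_def leqA_def ominusA_def indN_E ini_N)

lemma XsN_eq: "XsN (enc_tsi T) s = Cd (Xs T s)"
proof -
  have "XsN (enc_tsi T) s = (\<Sum>c<trc (enc_tsi T). if c \<in> E ` Xs T s then 2 ^ c else 0)"
    unfolding XsN_def using finTr
    by (intro sum.cong refl) (auto simp: trc_N memb_Cd Xs_def)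
  also have "\<dots> = set_encode (E ` Xs T s)"
    by (rule sum_set_encode) (use finXs finTr Xs_sub in \<open>auto simp: trc_N intro: E_less_Cd\<close>)
  finally show ?thesis by (simp add: Cd_def)
qed

lemma otN_E: "otN (enc_tsi T) (E r) (E r') \<longleftrightarrow> otimes T r r'"
  by (simp add: otN_def otimes_def indN_E)

lemma subN_Cd: "finite M \<Longrightarrow> finite R \<Longrightarrow> subN (Cd M) (Cd R) \<longleftrightarrow> M \<subseteq> R"
  unfolding subN_def by (subst ball_Cd) auto

lemma sqsubN_Cd: "M \<subseteq> Tr T \<Longrightarrow> R \<subseteq> Tr T \<Longrightarrow> sqsubN (enc_tsi T) (Cd M) (Cd R) \<longleftrightarrow> sqsub T M R"
proof -
  assume a: "M \<subseteq> Tr T" "R \<subseteq> Tr T"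
  then have f: "finite M" "finite R" using finTr finite_subset by auto
  show ?thesis unfolding sqsubN_def sqsub_def
    using f by (simp add: subN_Cd bex_Cd ball_Cd otN_E) blast
qed

lemma src_less: "r \<in> Tr T \<Longrightarrow> src r < Cd (Tr T)"
  by (metis E_def' E_less_Cd finTr le_less_trans le_prod_encode_1)

lemma cfreeN_Cd: "M \<subseteq> Tr T \<Longrightarrow> cfreeN (enc_tsi T) (Cd M) \<longleftrightarrow> conflict_free T M"
proof -
  assume a: "M \<subseteq> Tr T"
  then have f: "finite M" using finTr finite_subset by auto
  have ex: "(\<exists>s<Suc (Cd M). \<forall>t\<in>M. src t = s) \<longleftrightarrow> (\<exists>s. \<forall>t\<in>M. src t = s)"
  proof
    assume "\<exists>s. \<forall>t\<in>M. src t = s"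
    then obtain s where s: "\<forall>t\<in>M. src t = s" by blast
    show "\<exists>s<Suc (Cd M). \<forall>t\<in>M. src t = s"
    proof (cases "M = {}")
      case True then show ?thesis by auto
    next
      case False
      then obtain t where t: "t \<in> M" by blast
      have "src t \<le> E t" using le_prod_encode_1 by (simp add: E_def')
      moreover have "E t < Cd M" using E_less_Cd[OF f t] .
      ultimately show ?thesis using s t by (intro exI[of _ s]) auto
    qed
  qed auto
  show ?thesis unfolding cfreeN_def conflict_free_def
    using f a finTr by (simp add: subN_Cd ball_Cd otN_E trc_N ex)
qed

lemma Xs_big: "s \<ge> Cd (Tr T) \<Longrightarrow> Xs T s = {}"
  by (auto simp: Xs_def dest: src_less)

lemma supN_Cd: "M \<subseteq> Tr T \<Longrightarrow> supN (enc_tsi T) (Cd M) \<longleftrightarrow> support_set T M"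
proof -
  assume a: "M \<subseteq> Tr T"
  then have f: "finite M" using finTr finite_subset by auto
  have ex: "(\<exists>s<Suc (Cd (Tr T)). M = Xs T s) \<longleftrightarrow> (\<exists>s. M = Xs T s)"
  proof
    assume "\<exists>s. M = Xs T s"
    then obtain s where s: "M = Xs T s" by blast
    show "\<exists>s<Suc (Cd (Tr T)). M = Xs T s"
    proof (cases "s < Cd (Tr T)")
      case True then show ?thesis using s by (intro exI[of _ s]) auto
    next
      case False
      then show ?thesis using s Xs_big[of s] Xs_big[of "Cd (Tr T)"] by (intro exI[of _ "Cd (Tr T)"]) auto
    qed
  qed auto
  show ?thesis unfolding supN_def support_set_def
    using f a finXs by (simp add: XsN_eq trc_N Cd_inj Cd_zero cfreeN_Cd ex)
qed

lemma procsets_sub: "M \<in> procsets T \<Longrightarrow> M \<subseteq> Tr T"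
  by (auto simp: procsets_def Xs_def sqsub_def)

lemma procN_Cd: "M \<subseteq> Tr T \<Longrightarrow> procN (enc_tsi T) (Cd M) \<longleftrightarrow> M \<in> procsets T"
proof -
  assume a: "M \<subseteq> Tr T"
  then have f: "finite M" using finTr finite_subset by auto
  have st: "(\<exists>s<stc (enc_tsi T). memb s (stc (enc_tsi T)) \<and> P s) \<longleftrightarrow> (\<exists>s\<in>St T. P s)" for P
    using finSt mem_less[OF finSt] by (auto simp: stc_N memb_iff)
  show ?thesis unfolding procN_def procsets_def
    using f a finXs Xs_sub
    by (simp add: st XsN_eq Cd_inj supN_Cd sqsubN_Cd) blast
qed

end



type_synonym proc = "trans set \<times> trans option"

definition vp :: "tsi \<Rightarrow> proc \<Rightarrow> bool" where
  "vp T p \<longleftrightarrow> fst p \<subseteq> Tr T \<and> (\<forall>r. snd p = Some r \<longrightarrow> r \<in> Tr T)"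

definition D1 :: "tsi \<Rightarrow> tsi \<Rightarrow> (proc \<Rightarrow> proc \<Rightarrow> bool) \<Rightarrow> nat \<Rightarrow> trans set \<Rightarrow> trans option \<Rightarrow> trans set \<Rightarrow> trans option \<Rightarrow> bool" where
  "D1 T1 T2 A m R1 t1 R2 t2 \<longleftrightarrow> (\<forall>r\<in>R1. stm m T1 t1 r \<longrightarrow>
     (\<exists>r'\<in>R2. lab r' = lab r \<and> stm m T2 t2 r' \<and> A (Xs T1 (tgt r), Some r) (Xs T2 (tgt r'), Some r')))"
definition D2 :: "tsi \<Rightarrow> tsi \<Rightarrow> (proc \<Rightarrow> proc \<Rightarrow> bool) \<Rightarrow> nat \<Rightarrow> trans set \<Rightarrow> trans option \<Rightarrow> trans set \<Rightarrow> trans option \<Rightarrow> bool" where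
  "D2 T1 T2 A m R1 t1 R2 t2 \<longleftrightarrow> (\<forall>r'\<in>R2. stm m T2 t2 r' \<longrightarrow>
     (\<exists>r\<in>R1. lab r = lab r' \<and> stm m T1 t1 r \<and> A (Xs T1 (tgt r), Some r) (Xs T2 (tgt r'), Some r')))"
definition O1 :: "tsi \<Rightarrow> tsi \<Rightarrow> (proc \<Rightarrow> proc \<Rightarrow> bool) \<Rightarrow> trans set \<Rightarrow> trans option \<Rightarrow> trans set \<Rightarrow> trans option \<Rightarrow> bool" where
  "O1 T1 T2 A R1 t1 R2 t2 \<longleftrightarrow> (\<forall>M\<in>procsets T1. sqsub T1 M R1 \<longrightarrow>
     (\<exists>M'\<in>procsets T2. sqsub T2 M' R2 \<and> A (M, t1) (M', t2)))"
definition O2 :: "tsi \<Rightarrow> tsi \<Rightarrow> (proc \<Rightarrow> proc \<Rightarrow> bool) \<Rightarrow> trans set \<Rightarrow> trans option \<Rightarrow> trans set \<Rightarrow> trans option \<Rightarrow> bool" where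
  "O2 T1 T2 A R1 t1 R2 t2 \<longleftrightarrow> (\<forall>M'\<in>procsets T2. sqsub T2 M' R2 \<longrightarrow>
     (\<exists>M\<in>procsets T1. sqsub T1 M R1 \<and> A (M, t1) (M', t2)))"

context
  fixes T :: tsi
  assumes fin: "finite_tsi T"
begin

lemma all_proc:
  assumes "R \<subseteq> Tr T"
  shows "(\<forall>M<Suc (Cd R). procN (enc_tsi T) M \<and> sqsubN (enc_tsi T) M (Cd R) \<longrightarrow> P M) \<longleftrightarrow>
         (\<forall>M\<in>procsets T. sqsub T M R \<longrightarrow> P (Cd M))"
proof -
  have fR: "finite R" using assms finTr[OF fin] finite_subset by auto
  show ?thesis
  proof
    assume H: "\<forall>M<Suc (Cd R). procN (enc_tsi T) M \<and> sqsubN (enc_tsi T) M (Cd R) \<longrightarrow> P M"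
    show "\<forall>M\<in>procsets T. sqsub T M R \<longrightarrow> P (Cd M)"
    proof (intro ballI impI)
      fix M assume M: "M \<in> procsets T" "sqsub T M R"
      then have "M \<subseteq> R" by (simp add: sqsub_def)
      then have "Cd M < Suc (Cd R)" using Cd_mono[OF fR] by (simp add: le_imp_less_Suc)
      moreover have "procN (enc_tsi T) (Cd M)" using procN_Cd[OF fin] M procsets_sub[OF fin] by blast
      moreover have "sqsubN (enc_tsi T) (Cd M) (Cd R)" using sqsubN_Cd[OF fin] M procsets_sub[OF fin] assms by blast
      ultimately show "P (Cd M)" using H by blast
    qed
  next
    assume H: "\<forall>M\<in>procsets T. sqsub T M R \<longrightarrow> P (Cd M)"
    show "\<forall>M<Suc (Cd R). procN (enc_tsi T) M \<and> sqsubN (enc_tsi T) M (Cd R) \<longrightarrow> P M"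
    proof (intro allI impI)
      fix M assume M: "M < Suc (Cd R)" "procN (enc_tsi T) M \<and> sqsubN (enc_tsi T) M (Cd R)"
      define M' where "M' = {r\<in>R. memb (E r) M}"
      have M'sub: "M' \<subseteq> Tr T" using assms by (auto simp: M'_def)
      have "M = Cd M'" unfolding M'_def
        by (rule decode_sub[OF fR]) (use M in \<open>simp add: sqsubN_def\<close>)
      with M have "procN (enc_tsi T) (Cd M')" "sqsubN (enc_tsi T) (Cd M') (Cd R)" by auto
      then have "M' \<in> procsets T" "sqsub T M' R"
        using procN_Cd[OF fin M'sub] sqsubN_Cd[OF fin M'sub assms] by auto
      then show "P M" using H \<open>M = Cd M'\<close> by auto
    qed
  qed
qed

lemma ex_proc:
  assumes "R \<subseteq> Tr T"
  shows "(\<exists>M<Suc (Cd R). procN (enc_tsi T) M \<and> sqsubN (enc_tsi T) M (Cd R) \<and> P M) \<longleftrightarrow>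
         (\<exists>M\<in>procsets T. sqsub T M R \<and> P (Cd M))"
  using all_proc[OF assms, of "\<lambda>M. \<not> P M"] by blast

end

context
  fixes T1 T2 :: tsi and Tb :: nat and A :: "proc \<Rightarrow> proc \<Rightarrow> bool"
  assumes f1: "finite_tsi T1" and f2: "finite_tsi T2"
    and H: "\<And>p q. vp T1 p \<Longrightarrow> vp T2 q \<Longrightarrow>
       inT Tb (Cd (fst p)) (tc (snd p)) (Cd (fst q)) (tc (snd q)) \<longleftrightarrow> A p q"
begin

lemma Hs: "r \<in> Tr T1 \<Longrightarrow> r' \<in> Tr T2 \<Longrightarrow>
  inT Tb (Cd (Xs T1 (tgt r))) (Suc (E r)) (Cd (Xs T2 (tgt r'))) (Suc (E r')) \<longleftrightarrow>
  A (Xs T1 (tgt r), Some r) (Xs T2 (tgt r'), Some r')"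
  using H[of "(Xs T1 (tgt r), Some r)" "(Xs T2 (tgt r'), Some r')"]
  by (simp add: vp_def tc_def Xs_sub[OF f1] Xs_sub[OF f2])

lemma dia1_tr:
  assumes "R1 \<subseteq> Tr T1" "R2 \<subseteq> Tr T2"
  shows "dia1 (enc_tsi T1) (enc_tsi T2) Tb m (Cd R1) (tc t1) (Cd R2) (tc t2) \<longleftrightarrow> D1 T1 T2 A m R1 t1 R2 t2"
proof -
  have f: "finite R1" "finite R2" using assms finTr[OF f1] finTr[OF f2] finite_subset by auto
  have "dia1 (enc_tsi T1) (enc_tsi T2) Tb m (Cd R1) (tc t1) (Cd R2) (tc t2) \<longleftrightarrow>
    (\<forall>r\<in>R1. stm m T1 t1 r \<longrightarrow> (\<exists>r'\<in>R2. lab r' = lab r \<and> stm m T2 t2 r' \<and>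
       inT Tb (Cd (Xs T1 (tgt r))) (Suc (E r)) (Cd (Xs T2 (tgt r'))) (Suc (E r'))))"
    unfolding dia1_def using f by (simp add: ball_Cd2 bex_Cd stepN_tc[OF f1] stepN_tc[OF f2] XsN_eq[OF f1] XsN_eq[OF f2])
  also have "\<dots> \<longleftrightarrow> D1 T1 T2 A m R1 t1 R2 t2"
    unfolding D1_def using assms Hs by blast
  finally show ?thesis .
qed

lemma dia2_tr:
  assumes "R1 \<subseteq> Tr T1" "R2 \<subseteq> Tr T2"
  shows "dia2 (enc_tsi T1) (enc_tsi T2) Tb m (Cd R1) (tc t1) (Cd R2) (tc t2) \<longleftrightarrow> D2 T1 T2 A m R1 t1 R2 t2"
proof -
  have f: "finite R1" "finite R2" using assms finTr[OF f1] finTr[OF f2] finite_subset by auto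
  have "dia2 (enc_tsi T1) (enc_tsi T2) Tb m (Cd R1) (tc t1) (Cd R2) (tc t2) \<longleftrightarrow>
    (\<forall>r'\<in>R2. stm m T2 t2 r' \<longrightarrow> (\<exists>r\<in>R1. lab r = lab r' \<and> stm m T1 t1 r \<and>
       inT Tb (Cd (Xs T1 (tgt r))) (Suc (E r)) (Cd (Xs T2 (tgt r'))) (Suc (E r'))))"
    unfolding dia2_def using f by (simp add: ball_Cd2 bex_Cd stepN_tc[OF f1] stepN_tc[OF f2] XsN_eq[OF f1] XsN_eq[OF f2])
  also have "\<dots> \<longleftrightarrow> D2 T1 T2 A m R1 t1 R2 t2"
    unfolding D2_def using assms Hs by blast
  finally show ?thesis .
qed

lemma ot1_tr:
  assumes "R1 \<subseteq> Tr T1" "R2 \<subseteq> Tr T2" "\<forall>r. t1 = Some r \<longrightarrow> r \<in> Tr T1" "\<forall>r. t2 = Some r \<longrightarrow> r \<in> Tr T2"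
  shows "ot1 (enc_tsi T1) (enc_tsi T2) Tb (Cd R1) (tc t1) (Cd R2) (tc t2) \<longleftrightarrow> O1 T1 T2 A R1 t1 R2 t2"
proof -
  have "ot1 (enc_tsi T1) (enc_tsi T2) Tb (Cd R1) (tc t1) (Cd R2) (tc t2) \<longleftrightarrow>
    (\<forall>M\<in>procsets T1. sqsub T1 M R1 \<longrightarrow> (\<exists>M'\<in>procsets T2. sqsub T2 M' R2 \<and> inT Tb (Cd M) (tc t1) (Cd M') (tc t2)))"
    unfolding ot1_def by (simp only: all_proc[OF f1 assms(1)] ex_proc[OF f2 assms(2)])
  also have "\<dots> \<longleftrightarrow> O1 T1 T2 A R1 t1 R2 t2"
    unfolding O1_def using H[of "(_, t1)" "(_, t2)"] procsets_sub[OF f1] procsets_sub[OF f2] assms(3,4)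
    by (simp add: vp_def)
  finally show ?thesis .
qed

lemma ot2_tr:
  assumes "R1 \<subseteq> Tr T1" "R2 \<subseteq> Tr T2" "\<forall>r. t1 = Some r \<longrightarrow> r \<in> Tr T1" "\<forall>r. t2 = Some r \<longrightarrow> r \<in> Tr T2"
  shows "ot2 (enc_tsi T1) (enc_tsi T2) Tb (Cd R1) (tc t1) (Cd R2) (tc t2) \<longleftrightarrow> O2 T1 T2 A R1 t1 R2 t2"
proof -
  have "ot2 (enc_tsi T1) (enc_tsi T2) Tb (Cd R1) (tc t1) (Cd R2) (tc t2) \<longleftrightarrow>
    (\<forall>M'\<in>procsets T2. sqsub T2 M' R2 \<longrightarrow> (\<exists>M\<in>procsets T1. sqsub T1 M R1 \<and> inT Tb (Cd M) (tc t1) (Cd M') (tc t2)))"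
    unfolding ot2_def by (simp only: all_proc[OF f2 assms(2)] ex_proc[OF f1 assms(1)])
  also have "\<dots> \<longleftrightarrow> O2 T1 T2 A R1 t1 R2 t2"
    unfolding O2_def using H[of "(_, t1)" "(_, t2)"] procsets_sub[OF f1] procsets_sub[OF f2] assms(3,4)
    by (simp add: vp_def)
  finally show ?thesis .
qed

lemma condN_tr:
  assumes "vp T1 (R1, t1)" "vp T2 (R2, t2)"
  shows "condN (enc_tsi T1) (enc_tsi T2) Tb (Cd R1) (tc t1) (Cd R2) (tc t2) \<longleftrightarrow>
    A (R1, t1) (R2, t2) \<and> D1 T1 T2 A 0 R1 t1 R2 t2 \<and> D2 T1 T2 A 0 R1 t1 R2 t2 \<and>
    D1 T1 T2 A 1 R1 t1 R2 t2 \<and> D2 T1 T2 A 1 R1 t1 R2 t2 \<and>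
    O1 T1 T2 A R1 t1 R2 t2 \<and> O2 T1 T2 A R1 t1 R2 t2"
  using assms H[OF assms]
  by (simp add: condN_def vp_def dia1_tr dia2_tr ot1_tr ot2_tr)

end

definition box :: "nat \<Rightarrow> nat \<Rightarrow> (nat \<times> nat \<times> nat \<times> nat) set" where
  "box n1 n2 = {..<Suc (trc n1)} \<times> {..<Suc (trc n1)} \<times> {..<Suc (trc n2)} \<times> {..<Suc (trc n2)}"

fun pc4u :: "nat \<times> nat \<times> nat \<times> nat \<Rightarrow> nat" where
  "pc4u (a, b, c, d) = pc4 a b c d"

fun Pt :: "nat \<Rightarrow> nat \<Rightarrow> nat \<Rightarrow> nat \<Rightarrow> nat \<times> nat \<times> nat \<times> nat \<Rightarrow> bool" where
  "Pt n1 n2 Tb fl (a, b, c, d) \<longleftrightarrow> validN n1 a b \<and> validN n2 c d \<and> (fl = 0 \<or> condN n1 n2 Tb a b c d)"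

lemma inj_pc4u: "inj pc4u"
  by (rule injI) (auto simp: pc4_def peN_eq)

lemma finite_box: "finite (box n1 n2)" by (simp add: box_def)

lemma sum4: "(\<Sum>a\<in>A. \<Sum>b\<in>B. \<Sum>c\<in>C. \<Sum>d\<in>D. f (a, b, c, d)) = (\<Sum>x\<in>A \<times> B \<times> C \<times> D. f x)"
  by (simp add: sum.cartesian_product split_def)

lemma tabN_eq: "tabN n1 n2 Tb fl = set_encode (pc4u ` {x\<in>box n1 n2. Pt n1 n2 Tb fl x})"
proof -
  have "tabN n1 n2 Tb fl = (\<Sum>a<Suc (trc n1). \<Sum>b<Suc (trc n1). \<Sum>c<Suc (trc n2). \<Sum>d<Suc (trc n2).
     (\<lambda>x. if Pt n1 n2 Tb fl x then (2::nat) ^ pc4u x else 0) (a, b, c, d))"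
    by (simp only: tabN_def Pt.simps pc4u.simps)
  also have "\<dots> = (\<Sum>x\<in>box n1 n2. if Pt n1 n2 Tb fl x then 2 ^ pc4u x else 0)"
    unfolding box_def by (rule sum4)
  also have "\<dots> = (\<Sum>x\<in>{x\<in>box n1 n2. Pt n1 n2 Tb fl x}. 2 ^ pc4u x)"
    by (rule sum.inter_filter[symmetric]) (rule finite_box)
  also have "\<dots> = set_encode (pc4u ` {x\<in>box n1 n2. Pt n1 n2 Tb fl x})"
    unfolding set_encode_def
    by (rule sum.reindex[symmetric, unfolded comp_def]) (meson inj_pc4u inj_on_subset subset_UNIV)
  finally show ?thesis .
qed

lemma memb_tabN: "memb (pc4u x) (tabN n1 n2 Tb fl) \<longleftrightarrow> x \<in> box n1 n2 \<and> Pt n1 n2 Tb fl x"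
proof -
  have "finite (pc4u ` {x\<in>box n1 n2. Pt n1 n2 Tb fl x})" using finite_box by simp
  then show ?thesis
    by (simp add: tabN_eq memb_iff inj_image_mem_iff[OF inj_pc4u])
qed



fun depth :: "form \<Rightarrow> nat" where
  "depth TT = 0"
| "depth (Neg \<phi>) = depth \<phi>"
| "depth (Conj \<phi> \<psi>) = max (depth \<phi>) (depth \<psi>)"
| "depth (DiaC a \<phi>) = Suc (depth \<phi>)"
| "depth (DiaNC a \<phi>) = Suc (depth \<phi>)"
| "depth (DiaOt \<phi>) = Suc (depth \<phi>)"

definition agree :: "tsi \<Rightarrow> tsi \<Rightarrow> nat \<Rightarrow> proc \<Rightarrow> proc \<Rightarrow> bool" where
  "agree T1 T2 k p q \<longleftrightarrow> (\<forall>\<phi>. depth \<phi> \<le> k \<longrightarrow> sat T1 p \<phi> = sat T2 q \<phi>)"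

lemma agree_sym: "agree T1 T2 k p q \<longleftrightarrow> agree T2 T1 k q p"
  unfolding agree_def by auto

lemma depth0: "depth \<phi> = 0 \<Longrightarrow> sat T1 p \<phi> = sat T2 q \<phi>"
proof (induction \<phi>)
  case (Conj \<phi>1 \<phi>2) then show ?case by simp
qed auto

lemma agree0: "agree T1 T2 0 p q"
  unfolding agree_def using depth0 by auto

lemma agree_mono: "agree T1 T2 (Suc k) p q \<Longrightarrow> agree T1 T2 k p q"
  unfolding agree_def by auto

definition mk :: "nat \<Rightarrow> nat \<Rightarrow> form \<Rightarrow> form" where
  "mk m a \<psi> = (if m = 0 then DiaC a \<psi> else DiaNC a \<psi>)"

lemma sat_mk: "sat T (R, t) (mk m a \<psi>) \<longleftrightarrow> (\<exists>r\<in>R. lab r = a \<and> stm m T t r \<and> sat T (Xs T (tgt r), Some r) \<psi>)"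
  by (simp add: mk_def stm_def)

lemma depth_mk[simp]: "depth (mk m a \<psi>) = Suc (depth \<psi>)"
  by (simp add: mk_def)

fun conjs :: "form list \<Rightarrow> form" where
  "conjs [] = TT" | "conjs (x # xs) = Conj x (conjs xs)"

lemma sat_conjs: "sat T p (conjs l) \<longleftrightarrow> (\<forall>\<psi>\<in>set l. sat T p \<psi>)"
  by (induction l) auto

lemma depth_conjs: "\<forall>\<psi>\<in>set l. depth \<psi> \<le> k \<Longrightarrow> depth (conjs l) \<le> k"
  by (induction l) auto

lemma dist:
  assumes "finite Q" "\<forall>q\<in>Q. \<not> agree T1 T2 k p (g q)"
  shows "\<exists>\<Psi>. depth \<Psi> \<le> k \<and> sat T1 p \<Psi> \<and> (\<forall>q\<in>Q. \<not> sat T2 (g q) \<Psi>)"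
proof -
  have "\<forall>q\<in>Q. \<exists>\<psi>. depth \<psi> \<le> k \<and> sat T1 p \<psi> \<and> \<not> sat T2 (g q) \<psi>"
  proof
    fix q assume "q \<in> Q"
    then obtain \<phi> where \<phi>: "depth \<phi> \<le> k" "sat T1 p \<phi> \<noteq> sat T2 (g q) \<phi>"
      using assms(2) unfolding agree_def by blast
    show "\<exists>\<psi>. depth \<psi> \<le> k \<and> sat T1 p \<psi> \<and> \<not> sat T2 (g q) \<psi>"
    proof (cases "sat T1 p \<phi>")
      case True then show ?thesis using \<phi> by blast
    next
      case False then show ?thesis using \<phi> by (intro exI[of _ "Neg \<phi>"]) auto
    qed
  qed
  then obtain h where h: "\<forall>q\<in>Q. depth (h q) \<le> k \<and> sat T1 p (h q) \<and> \<not> sat T2 (g q) (h q)"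
    by metis
  obtain xs where xs: "set xs = Q" using finite_list[OF assms(1)] by blast
  show ?thesis
    using h xs by (intro exI[of _ "conjs (map h xs)"]) (auto simp: sat_conjs intro!: depth_conjs)
qed

lemma dist':
  assumes "finite P" "\<forall>p\<in>P. \<not> agree T1 T2 k (g p) q"
  shows "\<exists>\<Psi>. depth \<Psi> \<le> k \<and> sat T2 q \<Psi> \<and> (\<forall>p\<in>P. \<not> sat T1 (g p) \<Psi>)"
  using dist[of P T2 T1 k q g] assms by (simp add: agree_sym)

lemma finite_procsets: "finite_tsi T \<Longrightarrow> finite (procsets T)"
  by (rule finite_subset[of _ "Pow (Tr T)"]) (auto dest: procsets_sub simp: finTr)

lemma agree_Suc:
  assumes f1: "finite_tsi T1" and f2: "finite_tsi T2"
    and v1: "R1 \<subseteq> Tr T1" and v2: "R2 \<subseteq> Tr T2"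
  shows "agree T1 T2 (Suc k) (R1, t1) (R2, t2) \<longleftrightarrow>
    agree T1 T2 k (R1, t1) (R2, t2) \<and>
    D1 T1 T2 (agree T1 T2 k) 0 R1 t1 R2 t2 \<and> D2 T1 T2 (agree T1 T2 k) 0 R1 t1 R2 t2 \<and>
    D1 T1 T2 (agree T1 T2 k) 1 R1 t1 R2 t2 \<and> D2 T1 T2 (agree T1 T2 k) 1 R1 t1 R2 t2 \<and>
    O1 T1 T2 (agree T1 T2 k) R1 t1 R2 t2 \<and> O2 T1 T2 (agree T1 T2 k) R1 t1 R2 t2"
  (is "?L \<longleftrightarrow> ?R")
proof
  assume L: ?L
  have fR1: "finite R1" using v1 finTr[OF f1] finite_subset by auto
  have fR2: "finite R2" using v2 finTr[OF f2] finite_subset by auto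
  have DD1: "D1 T1 T2 (agree T1 T2 k) m R1 t1 R2 t2" for m
    unfolding D1_def
  proof (intro ballI impI, rule ccontr)
    fix r assume r: "r \<in> R1" "stm m T1 t1 r"
      and no: "\<not> (\<exists>r'\<in>R2. lab r' = lab r \<and> stm m T2 t2 r' \<and>
            agree T1 T2 k (Xs T1 (tgt r), Some r) (Xs T2 (tgt r'), Some r'))"
    let ?Q = "{r'\<in>R2. lab r' = lab r \<and> stm m T2 t2 r'}"
    obtain \<Psi> where \<Psi>: "depth \<Psi> \<le> k" "sat T1 (Xs T1 (tgt r), Some r) \<Psi>"
      "\<forall>r'\<in>?Q. \<not> sat T2 (Xs T2 (tgt r'), Some r') \<Psi>"
      using dist[of ?Q T1 T2 k "(Xs T1 (tgt r), Some r)" "\<lambda>r'. (Xs T2 (tgt r'), Some r')"] fR2 no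
      by auto
    have "sat T1 (R1, t1) (mk m (lab r) \<Psi>)" using r \<Psi> by (auto simp: sat_mk)
    moreover have "\<not> sat T2 (R2, t2) (mk m (lab r) \<Psi>)" using \<Psi> by (auto simp: sat_mk)
    moreover have "depth (mk m (lab r) \<Psi>) \<le> Suc k" using \<Psi> by simp
    ultimately show False using L unfolding agree_def by blast
  qed
  have DD2: "D2 T1 T2 (agree T1 T2 k) m R1 t1 R2 t2" for m
    unfolding D2_def
  proof (intro ballI impI, rule ccontr)
    fix r' assume r': "r' \<in> R2" "stm m T2 t2 r'"
      and no: "\<not> (\<exists>r\<in>R1. lab r = lab r' \<and> stm m T1 t1 r \<and>
            agree T1 T2 k (Xs T1 (tgt r), Some r) (Xs T2 (tgt r'), Some r'))"
    let ?P = "{r\<in>R1. lab r = lab r' \<and> stm m T1 t1 r}"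
    obtain \<Psi> where \<Psi>: "depth \<Psi> \<le> k" "sat T2 (Xs T2 (tgt r'), Some r') \<Psi>"
      "\<forall>r\<in>?P. \<not> sat T1 (Xs T1 (tgt r), Some r) \<Psi>"
      using dist'[of ?P T1 T2 k "\<lambda>r. (Xs T1 (tgt r), Some r)" "(Xs T2 (tgt r'), Some r')"] fR1 no
      by auto
    have "sat T2 (R2, t2) (mk m (lab r') \<Psi>)" using r' \<Psi> by (auto simp: sat_mk)
    moreover have "\<not> sat T1 (R1, t1) (mk m (lab r') \<Psi>)" using \<Psi> by (auto simp: sat_mk)
    moreover have "depth (mk m (lab r') \<Psi>) \<le> Suc k" using \<Psi> by simp
    ultimately show False using L unfolding agree_def by blast
  qed
  have OO1: "O1 T1 T2 (agree T1 T2 k) R1 t1 R2 t2"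
    unfolding O1_def
  proof (intro ballI impI, rule ccontr)
    fix M assume M: "M \<in> procsets T1" "sqsub T1 M R1"
      and no: "\<not> (\<exists>M'\<in>procsets T2. sqsub T2 M' R2 \<and> agree T1 T2 k (M, t1) (M', t2))"
    let ?Q = "{M'\<in>procsets T2. sqsub T2 M' R2}"
    obtain \<Psi> where \<Psi>: "depth \<Psi> \<le> k" "sat T1 (M, t1) \<Psi>" "\<forall>M'\<in>?Q. \<not> sat T2 (M', t2) \<Psi>"
      using dist[of ?Q T1 T2 k "(M, t1)" "\<lambda>M'. (M', t2)"] finite_procsets[OF f2] no
      by auto
    have "sat T1 (R1, t1) (DiaOt \<Psi>)" using M \<Psi> by auto
    moreover have "\<not> sat T2 (R2, t2) (DiaOt \<Psi>)" using \<Psi> by auto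
    moreover have "depth (DiaOt \<Psi>) \<le> Suc k" using \<Psi> by simp
    ultimately show False using L unfolding agree_def by blast
  qed
  have OO2: "O2 T1 T2 (agree T1 T2 k) R1 t1 R2 t2"
    unfolding O2_def
  proof (intro ballI impI, rule ccontr)
    fix M' assume M': "M' \<in> procsets T2" "sqsub T2 M' R2"
      and no: "\<not> (\<exists>M\<in>procsets T1. sqsub T1 M R1 \<and> agree T1 T2 k (M, t1) (M', t2))"
    let ?P = "{M\<in>procsets T1. sqsub T1 M R1}"
    obtain \<Psi> where \<Psi>: "depth \<Psi> \<le> k" "sat T2 (M', t2) \<Psi>" "\<forall>M\<in>?P. \<not> sat T1 (M, t1) \<Psi>"
      using dist'[of ?P T1 T2 k "\<lambda>M. (M, t1)" "(M', t2)"] finite_procsets[OF f1] no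
      by auto
    have "sat T2 (R2, t2) (DiaOt \<Psi>)" using M' \<Psi> by auto
    moreover have "\<not> sat T1 (R1, t1) (DiaOt \<Psi>)" using \<Psi> by auto
    moreover have "depth (DiaOt \<Psi>) \<le> Suc k" using \<Psi> by simp
    ultimately show False using L unfolding agree_def by blast
  qed
  show ?R using L agree_mono DD1 DD2 OO1 OO2 by blast
next
  assume R: ?R
  let ?A = "agree T1 T2 k"
  have "depth \<phi> \<le> Suc k \<Longrightarrow> sat T1 (R1, t1) \<phi> = sat T2 (R2, t2) \<phi>" for \<phi>
  proof (induction \<phi>)
    case (DiaC a \<psi>)
    have d: "depth \<psi> \<le> k" using DiaC by simp
    have "sat T1 (R1, t1) (mk 0 a \<psi>) = sat T2 (R2, t2) (mk 0 a \<psi>)"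
    proof
      assume "sat T1 (R1, t1) (mk 0 a \<psi>)"
      then obtain r where r: "r \<in> R1" "lab r = a" "stm 0 T1 t1 r" "sat T1 (Xs T1 (tgt r), Some r) \<psi>"
        by (auto simp: sat_mk)
      then obtain r' where "r' \<in> R2" "lab r' = lab r" "stm 0 T2 t2 r'"
        "?A (Xs T1 (tgt r), Some r) (Xs T2 (tgt r'), Some r')"
        using R unfolding D1_def by blast
      then show "sat T2 (R2, t2) (mk 0 a \<psi>)" using r d unfolding agree_def by (auto simp: sat_mk)
    next
      assume "sat T2 (R2, t2) (mk 0 a \<psi>)"
      then obtain r' where r': "r' \<in> R2" "lab r' = a" "stm 0 T2 t2 r'" "sat T2 (Xs T2 (tgt r'), Some r') \<psi>"
        by (auto simp: sat_mk)
      then obtain r where "r \<in> R1" "lab r = lab r'" "stm 0 T1 t1 r"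
        "?A (Xs T1 (tgt r), Some r) (Xs T2 (tgt r'), Some r')"
        using R unfolding D2_def by blast
      then show "sat T1 (R1, t1) (mk 0 a \<psi>)" using r' d unfolding agree_def by (auto simp: sat_mk)
    qed
    then show ?case by (simp add: mk_def)
  next
    case (DiaNC a \<psi>)
    have d: "depth \<psi> \<le> k" using DiaNC by simp
    have "sat T1 (R1, t1) (mk 1 a \<psi>) = sat T2 (R2, t2) (mk 1 a \<psi>)"
    proof
      assume "sat T1 (R1, t1) (mk 1 a \<psi>)"
      then obtain r where r: "r \<in> R1" "lab r = a" "stm 1 T1 t1 r" "sat T1 (Xs T1 (tgt r), Some r) \<psi>"
        by (auto simp: sat_mk)
      then obtain r' where "r' \<in> R2" "lab r' = lab r" "stm 1 T2 t2 r'"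
        "?A (Xs T1 (tgt r), Some r) (Xs T2 (tgt r'), Some r')"
        using R unfolding D1_def by blast
      then show "sat T2 (R2, t2) (mk 1 a \<psi>)" using r d unfolding agree_def by (auto simp: sat_mk)
    next
      assume "sat T2 (R2, t2) (mk 1 a \<psi>)"
      then obtain r' where r': "r' \<in> R2" "lab r' = a" "stm 1 T2 t2 r'" "sat T2 (Xs T2 (tgt r'), Some r') \<psi>"
        by (auto simp: sat_mk)
      then obtain r where "r \<in> R1" "lab r = lab r'" "stm 1 T1 t1 r"
        "?A (Xs T1 (tgt r), Some r) (Xs T2 (tgt r'), Some r')"
        using R unfolding D2_def by blast
      then show "sat T1 (R1, t1) (mk 1 a \<psi>)" using r' d unfolding agree_def by (auto simp: sat_mk)
    qed
    then show ?case by (simp add: mk_def)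
  next
    case (DiaOt \<psi>)
    have d: "depth \<psi> \<le> k" using DiaOt by simp
    show ?case
    proof
      assume "sat T1 (R1, t1) (DiaOt \<psi>)"
      then obtain M where M: "M \<in> procsets T1" "sqsub T1 M R1" "sat T1 (M, t1) \<psi>" by auto
      then obtain M' where "M' \<in> procsets T2" "sqsub T2 M' R2" "?A (M, t1) (M', t2)"
        using R unfolding O1_def by blast
      then show "sat T2 (R2, t2) (DiaOt \<psi>)" using M d unfolding agree_def by auto
    next
      assume "sat T2 (R2, t2) (DiaOt \<psi>)"
      then obtain M' where M': "M' \<in> procsets T2" "sqsub T2 M' R2" "sat T2 (M', t2) \<psi>" by auto
      then obtain M where "M \<in> procsets T1" "sqsub T1 M R1" "?A (M, t1) (M', t2)"
        using R unfolding O2_def by blast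
      then show "sat T1 (R1, t1) (DiaOt \<psi>)" using M' d unfolding agree_def by auto
    qed
  qed auto
  then show ?L unfolding agree_def by blast
qed



lemma inT_pc4u: "inT Tb a b c d \<longleftrightarrow> memb (pc4u (a, b, c, d)) Tb"
  by (simp add: inT_def)

lemma Tab_0: "Tab n1 n2 0 = tabN n1 n2 0 0" and Tab_Suc: "Tab n1 n2 (Suc k) = tabN n1 n2 (Tab n1 n2 k) 1"
  by (simp_all add: Tab_def)

definition codes :: "proc \<Rightarrow> proc \<Rightarrow> nat \<times> nat \<times> nat \<times> nat" where
  "codes p q = (Cd (fst p), tc (snd p), Cd (fst q), tc (snd q))"

context
  fixes T1 T2 :: tsi
  assumes f1: "finite_tsi T1" and f2: "finite_tsi T2"
begin

lemma tc_le: "(\<forall>r. t = Some r \<longrightarrow> r \<in> Tr T) \<Longrightarrow> finite_tsi T \<Longrightarrow> tc t < Suc (Cd (Tr T))"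
  by (cases t) (auto simp: tc_def intro: E_less_Cd finTr)

lemma valid_codes:
  assumes "finite_tsi T" "vp T p"
  shows "Cd (fst p) < Suc (trc (enc_tsi T)) \<and> tc (snd p) < Suc (trc (enc_tsi T)) \<and>
    validN (enc_tsi T) (Cd (fst p)) (tc (snd p))"
proof -
  have fT: "finite (Tr T)" using finTr[OF assms(1)] .
  have fp: "finite (fst p)" using assms(2) fT finite_subset by (auto simp: vp_def)
  have "Cd (fst p) \<le> Cd (Tr T)" using Cd_mono[OF fT] assms(2) by (simp add: vp_def)
  moreover have "tc (snd p) < Suc (Cd (Tr T))" using tc_le assms by (simp add: vp_def)
  moreover have "subN (Cd (fst p)) (Cd (Tr T))" using subN_Cd[OF assms(1) fp fT] assms(2) by (simp add: vp_def)
  moreover have "tc (snd p) = 0 \<or> memb (tc (snd p) - 1) (Cd (Tr T))"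
    using assms(2) fT by (cases "snd p") (auto simp: tc_def vp_def)
  ultimately show ?thesis by (simp add: trc_N[OF assms(1)] validN_def)
qed

lemma codes_box: "vp T1 p \<Longrightarrow> vp T2 q \<Longrightarrow> codes p q \<in> box (enc_tsi T1) (enc_tsi T2)"
proof -
  assume a: "vp T1 p" "vp T2 q"
  note c1 = valid_codes[OF f1 a(1)] and c2 = valid_codes[OF f2 a(2)]
  show ?thesis unfolding codes_def box_def
    by (intro SigmaI; simp only: lessThan_iff; use c1 c2 in blast)
qed

lemma tab_corr:
  "\<forall>p q. vp T1 p \<longrightarrow> vp T2 q \<longrightarrow>
     (memb (pc4u (codes p q)) (Tab (enc_tsi T1) (enc_tsi T2) k) \<longleftrightarrow> agree T1 T2 k p q)"
proof (induction k)
  case 0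
  show ?case
  proof (intro allI impI)
    fix p q assume a: "vp T1 p" "vp T2 q"
    have "memb (pc4u (codes p q)) (Tab (enc_tsi T1) (enc_tsi T2) 0) \<longleftrightarrow>
      codes p q \<in> box (enc_tsi T1) (enc_tsi T2) \<and> Pt (enc_tsi T1) (enc_tsi T2) 0 0 (codes p q)"
      by (simp only: Tab_0 memb_tabN)
    then show "memb (pc4u (codes p q)) (Tab (enc_tsi T1) (enc_tsi T2) 0) \<longleftrightarrow> agree T1 T2 0 p q"
      using codes_box[OF a] valid_codes[OF f1 a(1)] valid_codes[OF f2 a(2)]
      by (simp add: codes_def agree0)
  qed
next
  case (Suc k)
  show ?case
  proof (intro allI impI)
    fix p q assume vp1: "vp T1 p" and vp2: "vp T2 q"
    obtain R1 t1 where p: "p = (R1, t1)" by (cases p)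
    obtain R2 t2 where q: "q = (R2, t2)" by (cases q)
    have H: "\<And>p q. vp T1 p \<Longrightarrow> vp T2 q \<Longrightarrow>
       inT (Tab (enc_tsi T1) (enc_tsi T2) k) (Cd (fst p)) (tc (snd p)) (Cd (fst q)) (tc (snd q)) \<longleftrightarrow> agree T1 T2 k p q"
      using Suc.IH by (simp add: inT_pc4u codes_def)
    have "memb (pc4u (codes p q)) (Tab (enc_tsi T1) (enc_tsi T2) (Suc k)) \<longleftrightarrow>
      condN (enc_tsi T1) (enc_tsi T2) (Tab (enc_tsi T1) (enc_tsi T2) k) (Cd R1) (tc t1) (Cd R2) (tc t2)"
    proof -
      have "memb (pc4u (codes p q)) (Tab (enc_tsi T1) (enc_tsi T2) (Suc k)) \<longleftrightarrow>
        codes p q \<in> box (enc_tsi T1) (enc_tsi T2) \<and> Pt (enc_tsi T1) (enc_tsi T2) (Tab (enc_tsi T1) (enc_tsi T2) k) 1 (codes p q)"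
        by (simp only: Tab_Suc memb_tabN)
      then show ?thesis
        using valid_codes[OF f1 vp1] valid_codes[OF f2 vp2] codes_box[OF vp1 vp2]
        by (simp add: codes_def p q)
    qed
    also have "\<dots> \<longleftrightarrow> agree T1 T2 k (R1, t1) (R2, t2) \<and>
      D1 T1 T2 (agree T1 T2 k) 0 R1 t1 R2 t2 \<and> D2 T1 T2 (agree T1 T2 k) 0 R1 t1 R2 t2 \<and>
      D1 T1 T2 (agree T1 T2 k) 1 R1 t1 R2 t2 \<and> D2 T1 T2 (agree T1 T2 k) 1 R1 t1 R2 t2 \<and>
      O1 T1 T2 (agree T1 T2 k) R1 t1 R2 t2 \<and> O2 T1 T2 (agree T1 T2 k) R1 t1 R2 t2"
      by (rule condN_tr[OF f1 f2 H]) (use vp1 vp2 p q in auto)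
    also have "\<dots> \<longleftrightarrow> agree T1 T2 (Suc k) p q"
      unfolding p q by (rule agree_Suc[OF f1 f2, symmetric]) (use vp1 vp2 p q in \<open>auto simp: vp_def\<close>)
    finally show "memb (pc4u (codes p q)) (Tab (enc_tsi T1) (enc_tsi T2) (Suc k)) \<longleftrightarrow> agree T1 T2 (Suc k) p q" .
  qed
qed

end

lemma stab_card:
  fixes S :: "nat \<Rightarrow> 'a set"
  assumes "finite D" "\<And>k. S k \<subseteq> D" "\<And>k. S (Suc k) \<subseteq> S k"
  shows "\<exists>j\<le>card D. S (Suc j) = S j"
proof (rule ccontr)
  assume "\<not> ?thesis"
  then have ne: "\<And>j. j \<le> card D \<Longrightarrow> S (Suc j) \<subset> S j" using assms(3) by blast
  have "j \<le> Suc (card D) \<Longrightarrow> card (S j) + j \<le> card D" for j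
  proof (induction j)
    case 0 then show ?case using card_mono[OF assms(1,2)] by simp
  next
    case (Suc j)
    have "card (S (Suc j)) < card (S j)"
      using psubset_card_mono[OF finite_subset[OF assms(2) assms(1)] ne[of j]] Suc.prems by simp
    then show ?case using Suc by simp
  qed
  from this[of "Suc (card D)"] show False by simp
qed

lemma Tab_eq_set: "Tab n1 n2 k = set_encode (pc4u ` {x\<in>box n1 n2. memb (pc4u x) (Tab n1 n2 k)})"
proof -
  obtain Tb fl where e: "Tab n1 n2 k = tabN n1 n2 Tb fl"
    by (cases k) (auto simp: Tab_0 Tab_Suc)
  show ?thesis unfolding e memb_tabN by (simp add: tabN_eq)
qed

lemma Tab_dec: "memb (pc4u x) (Tab n1 n2 (Suc k)) \<Longrightarrow> memb (pc4u x) (Tab n1 n2 k)"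
proof -
  assume "memb (pc4u x) (Tab n1 n2 (Suc k))"
  then have "x \<in> box n1 n2 \<and> Pt n1 n2 (Tab n1 n2 k) 1 x" by (simp only: Tab_Suc memb_tabN)
  then show ?thesis by (cases x) (simp add: condN_def inT_def)
qed

lemma Tab_decs: "k \<le> m \<Longrightarrow> memb (pc4u x) (Tab n1 n2 m) \<Longrightarrow> memb (pc4u x) (Tab n1 n2 k)"
  by (induction m rule: dec_induct) (auto intro: Tab_dec)

lemma card_box: "card (box n1 n2) = Bd n1 n2"
  by (simp only: box_def Bd_def card_cartesian_product card_lessThan mult.assoc)

lemma Tab_stable: "\<exists>j\<le>Bd n1 n2. \<forall>i. Tab n1 n2 (j + i) = Tab n1 n2 j"
proof -
  let ?S = "\<lambda>k. {x\<in>box n1 n2. memb (pc4u x) (Tab n1 n2 k)}"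
  have sub: "\<And>k. ?S k \<subseteq> box n1 n2" by blast
  have dc: "\<And>k. ?S (Suc k) \<subseteq> ?S k" using Tab_dec by blast
  obtain j where j: "j \<le> card (box n1 n2)" "?S (Suc j) = ?S j"
    using stab_card[of "box n1 n2" ?S, OF finite_box sub dc] by blast
  have "Tab n1 n2 (Suc j) = set_encode (pc4u ` ?S (Suc j))" by (rule Tab_eq_set)
  also have "\<dots> = set_encode (pc4u ` ?S j)" by (simp only: j(2))
  also have "\<dots> = Tab n1 n2 j" by (rule Tab_eq_set[symmetric])
  finally have e: "Tab n1 n2 (Suc j) = Tab n1 n2 j" .
  have "Tab n1 n2 (j + i) = Tab n1 n2 j" for i
  proof (induction i)
    case (Suc i)
    have "Tab n1 n2 (j + Suc i) = tabN n1 n2 (Tab n1 n2 (j + i)) 1" using Tab_Suc[of n1 n2 "j + i"] by simp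
    also have "\<dots> = tabN n1 n2 (Tab n1 n2 j) 1" using Suc.IH by simp
    also have "\<dots> = Tab n1 n2 (Suc j)" using Tab_Suc[of n1 n2 j] by simp
    also have "\<dots> = Tab n1 n2 j" by (rule e)
    finally show ?case .
  qed simp
  then show ?thesis using j card_box by auto
qed

lemma Tab_lim: "memb (pc4u x) (Tab n1 n2 (Bd n1 n2)) \<longleftrightarrow> (\<forall>k. memb (pc4u x) (Tab n1 n2 k))"
proof -
  obtain j where j: "j \<le> Bd n1 n2" "\<forall>i. Tab n1 n2 (j + i) = Tab n1 n2 j" using Tab_stable by blast
  have eq: "Tab n1 n2 k = Tab n1 n2 (Bd n1 n2)" if "k \<ge> Bd n1 n2" for k
  proof -
    have "Tab n1 n2 k = Tab n1 n2 (j + (k - j))" using j(1) that by simp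
    also have "\<dots> = Tab n1 n2 j" using j(2) by blast
    also have "\<dots> = Tab n1 n2 (j + (Bd n1 n2 - j))" using j(2) by simp
    also have "\<dots> = Tab n1 n2 (Bd n1 n2)" using j(1) by simp
    finally show ?thesis .
  qed
  show ?thesis
  proof
    assume a: "memb (pc4u x) (Tab n1 n2 (Bd n1 n2))"
    show "\<forall>k. memb (pc4u x) (Tab n1 n2 k)"
    proof
      fix k show "memb (pc4u x) (Tab n1 n2 k)"
      proof (cases "k \<le> Bd n1 n2")
        case True then show ?thesis using Tab_decs a by blast
      next
        case False then show ?thesis using eq[of k] a by simp
      qed
    qed
  qed blast
qed

lemma dec_correct:
  assumes f1: "finite_tsi T1" and f2: "finite_tsi T2"
  shows "dec (enc_tsi T1) (enc_tsi T2) = (if tfl_equiv T1 T2 then 1 else 0)"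
proof -
  let ?p = "init_proc T1" and ?q = "init_proc T2"
  have v: "vp T1 ?p" "vp T2 ?q"
    by (auto simp: vp_def init_proc_def Xs_def)
  have "dec (enc_tsi T1) (enc_tsi T2) = (if memb (pc4u (codes ?p ?q)) (Tab (enc_tsi T1) (enc_tsi T2) (Bd (enc_tsi T1) (enc_tsi T2))) then 1 else 0)"
    by (simp add: dec_def inT_pc4u codes_def init_proc_def tc_def XsN_eq[OF f1] XsN_eq[OF f2] ini_N[OF f1] ini_N[OF f2])
  also have "\<dots> = (if \<forall>k. agree T1 T2 k ?p ?q then 1 else 0)"
  proof -
    have "\<And>k. memb (pc4u (codes ?p ?q)) (Tab (enc_tsi T1) (enc_tsi T2) k) \<longleftrightarrow> agree T1 T2 k ?p ?q"
      using tab_corr[OF f1 f2] v by blast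
    then show ?thesis by (simp only: Tab_lim)
  qed
  also have "(\<forall>k. agree T1 T2 k ?p ?q) \<longleftrightarrow> tfl_equiv T1 T2"
    unfolding agree_def tfl_equiv_def by auto
  finally show ?thesis .
qed

theorem corollary6:
  shows "\<exists>f. \<forall>T1 T2. finite_tsi T1 \<longrightarrow> finite_tsi T2 \<longrightarrow>
           eval f [enc_tsi T1, enc_tsi T2] (if tfl_equiv T1 T2 then 1 else 0)"
proof -
  obtain f where f: "\<forall>xs. length xs = 2 \<longrightarrow> eval f xs (dec (xs ! 0) (xs ! 1))"
    using dec_base unfolding cf_def by blast
  show ?thesis
  proof (intro exI allI impI)
    fix T1 T2 assume "finite_tsi T1" "finite_tsi T2"
    then show "eval f [enc_tsi T1, enc_tsi T2] (if tfl_equiv T1 T2 then 1 else 0)"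
      using f[rule_format, of "[enc_tsi T1, enc_tsi T2]"] dec_correct by simp
  qed
qed


end
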